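(* Consider a qubit chain with sites indexed by $\mathbb{Z}$ and the Floquet unitary $U=\prod_{i\ \mathrm{odd}}C_{i,i+1}\prod_{i\ \mathrm{even}}C_{i,i+1}$, where each $C_{i,i+1}$ is a two-qubit Clifford gate on sites $(i,i+1)$ that is not in the product class. Let $k\ge1$, $a\in\mathbb{Z}$, and suppose $U$ has an irreducible left $k$-wall around $C=\{a+1,\dots,a+k\}$. Then every gate interior to the wall, i.e. every $C_{i,i+1}$ with $a+1\le i\le a+k-1$, belongs to the $\mathrm{SWAP}$-class or the $\mathrm{FSWAP}$-class.
   Context: Two-qubit Clifford gates fall into four classes under $C\mapsto(a_1\otimes a_2)C(a_3\otimes a_4)$ with $a_i$ single-qubit Cliffords (up to global phase): the product class (gates of the form $a\otimes b$), the $\mathrm{CZ}$-class $\{(a_1\otimes a_2)\,\mathrm{CZ}\,(a_3\otimes a_4)\}$ with $\mathrm{CZ}=\mathrm{diag}(1,1,1,-1)$, the $\mathrm{SWAP}$-class $\{(a_1\otimes a_2)\,\mathrm{SWAP}\,(a_3\otimes a_4)\}$, and the $\mathrm{FSWAP}$-class $\{(a_1\otimes a_2)\,\mathrm{CZ}\cdot\mathrm{SWAP}\,(a_3\otimes a_4)\}$. For integers $b\le c$, set $L_b=\{i\le b\}$, $C_{b,c}=\{b+1,\dots,c\}$ (empty if $b=c$), $R_c=\{i>c\}$. $U$ satisfies the left wall condition for $(b,c)$ if for every finitely supported Pauli string $P$ supported in $L_b$ and every integer $t\ge1$, $U^tPU^{-t}$ acts as the identity on every site of $R_c$. $U$ has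 an irreducible left $k$-wall around $\{a+1,\dots,a+k\}$ if it satisfies the left wall condition for $(a,a+k)$ but not for any $(b,c)$ with $a\le b\le c\le a+k$ and $(b,c)\ne(a,a+k)$. *)

theory Defs
  imports "Jordan_Normal_Form.Schur_Decomposition"
begin

datatype pauli = PI | PX | PY | PZ

definition pmat :: "pauli \<Rightarrow> complex mat" where
  "pmat p = (case p of
      PI \<Rightarrow> mat_of_rows_list 2 [[1, 0], [0, 1]]
    | PX \<Rightarrow> mat_of_rows_list 2 [[0, 1], [1, 0]]
    | PY \<Rightarrow> mat_of_rows_list 2 [[0, -\<i>], [\<i>, 0]]
    | PZ \<Rightarrow> mat_of_rows_list 2 [[1, 0], [0, -1]])"

text \<open>Kronecker product of two 2x2 matrices (first factor = site i, second = site i+1).\<close>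
definition kron2 :: "complex mat \<Rightarrow> complex mat \<Rightarrow> complex mat" where
  "kron2 A B = mat 4 4 (\<lambda>(r, s). A $$ (r div 2, s div 2) * B $$ (r mod 2, s mod 2))"

definition unitary_mat :: "nat \<Rightarrow> complex mat \<Rightarrow> bool" where
  "unitary_mat n U \<longleftrightarrow> U \<in> carrier_mat n n \<and> U * mat_adjoint U = 1\<^sub>m n"

definition clifford1 :: "complex mat \<Rightarrow> bool" where
  "clifford1 A \<longleftrightarrow> unitary_mat 2 A \<and>
     (\<forall>p. \<exists>q c. A * pmat p * mat_adjoint A = c \<cdot>\<^sub>m pmat q)"

definition clifford2 :: "complex mat \<Rightarrow> bool" where
  "clifford2 G \<longleftrightarrow> unitary_mat 4 G \<and>
     (\<forall>p q. \<exists>p' q' c. G * kron2 (pmat p) (pmat q) * mat_adjoint G = c \<cdot>\<^sub>m kron2 (pmat p') (pmat q'))"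

definition CZ :: "complex mat" where
  "CZ = mat_of_rows_list 4 [[1,0,0,0],[0,1,0,0],[0,0,1,0],[0,0,0,-1]]"

definition SWAP :: "complex mat" where
  "SWAP = mat_of_rows_list 4 [[1,0,0,0],[0,0,1,0],[0,1,0,0],[0,0,0,1]]"

text \<open>Classes under local single-qubit Clifford dressing. A global phase can be
  absorbed into the (phase-closed) single-qubit Clifford factors.\<close>
definition product_class :: "complex mat \<Rightarrow> bool" where
  "product_class G \<longleftrightarrow> (\<exists>a b. clifford1 a \<and> clifford1 b \<and> G = kron2 a b)"

definition dressed_class :: "complex mat \<Rightarrow> complex mat \<Rightarrow> bool" where
  "dressed_class M G \<longleftrightarrow> (\<exists>a1 a2 a3 a4. clifford1 a1 \<and> clifford1 a2 \<and> clifford1 a3 \<and> clifford1 a4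
      \<and> G = kron2 a1 a2 * M * kron2 a3 a4)"

definition CZ_class :: "complex mat \<Rightarrow> bool" where "CZ_class = dressed_class CZ"
definition SWAP_class :: "complex mat \<Rightarrow> bool" where "SWAP_class = dressed_class SWAP"
definition FSWAP_class :: "complex mat \<Rightarrow> bool" where "FSWAP_class = dressed_class (CZ * SWAP)"

definition gate_img :: "complex mat \<Rightarrow> pauli \<times> pauli \<Rightarrow> pauli \<times> pauli" where
  "gate_img G pq = (SOME pq'. \<exists>c. G * kron2 (pmat (fst pq)) (pmat (snd pq)) * mat_adjoint G
                                 = c \<cdot>\<^sub>m kron2 (pmat (fst pq')) (pmat (snd pq')))"

definition layer :: "(int \<Rightarrow> complex mat) \<Rightarrow> int \<Rightarrow> (int \<Rightarrow> pauli) \<Rightarrow> (int \<Rightarrow> pauli)" where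
  "layer C par P = (\<lambda>j. if (j - par) mod 2 = 0
        then fst (gate_img (C j) (P j, P (j + 1)))
        else snd (gate_img (C (j - 1)) (P (j - 1), P j)))"

text \<open>P \<mapsto> U P U^{-1} for U = (prod_{i odd} C_{i,i+1}) (prod_{i even} C_{i,i+1}):
  first the even layer, then the odd layer.\<close>
definition U_act :: "(int \<Rightarrow> complex mat) \<Rightarrow> (int \<Rightarrow> pauli) \<Rightarrow> (int \<Rightarrow> pauli)" where
  "U_act C P = layer C 1 (layer C 0 P)"

definition left_wall :: "(int \<Rightarrow> complex mat) \<Rightarrow> int \<Rightarrow> int \<Rightarrow> bool" where
  "left_wall C b c \<longleftrightarrow>
     (\<forall>P. finite {j. P j \<noteq> PI} \<longrightarrow> (\<forall>j. P j \<noteq> PI \<longrightarrow> j \<le> b) \<longrightarrow>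
        (\<forall>t::nat. t \<ge> 1 \<longrightarrow> (\<forall>j. j > c \<longrightarrow> ((U_act C ^^ t) P) j = PI)))"

definition irreducible_left_wall :: "(int \<Rightarrow> complex mat) \<Rightarrow> nat \<Rightarrow> int \<Rightarrow> bool" where
  "irreducible_left_wall C k a \<longleftrightarrow> left_wall C a (a + int k) \<and>
     (\<forall>b c. a \<le> b \<longrightarrow> b \<le> c \<longrightarrow> c \<le> a + int k \<longrightarrow> (b, c) \<noteq> (a, a + int k) \<longrightarrow> \<not> left_wall C b c)"

end

theory Submission
  imports Defs
begin


lemma sum2: "sum f {0..<2::nat} = f 0 + f 1" by (simp add: eval_nat_numeral atLeast0LessThan lessThan_Suc add_ac)
lemma sum4: "sum f {0..<4::nat} = f 0 + f 1 + f 2 + f 3" by (simp add: eval_nat_numeral atLeast0LessThan lessThan_Suc add_ac)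
lemma less2: "(r::nat) < 2 \<longleftrightarrow> r = 0 \<or> r = 1" by auto
lemma less4: "(r::nat) < 4 \<longleftrightarrow> r = 0 \<or> r = 1 \<or> r = 2 \<or> r = 3" by auto

lemma eq2I: assumes "A \<in> carrier_mat 2 2" "B \<in> carrier_mat 2 2"
  "A $$ (0,0) = B $$ (0,0)" "A $$ (0,1) = B $$ (0,1)" "A $$ (1,0) = B $$ (1,0)" "A $$ (1,1) = B $$ (1,1)"
  shows "A = B"
  apply (rule eq_matI) using assms by (auto simp: less2)

lemma mult2_index: assumes "A \<in> carrier_mat 2 2" "B \<in> carrier_mat 2 2" "i < 2" "j < 2"
  shows "(A * B) $$ (i,j) = A $$ (i,0) * B $$ (0,j) + A $$ (i,1) * B $$ (1,j)"
  using assms by (simp add: scalar_prod_def sum2)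

lemma adj_dims[simp]: "dim_row (mat_adjoint A) = dim_col A" "dim_col (mat_adjoint A) = dim_row A"
  by (simp_all add: mat_adjoint_def mat_of_rows_def)
lemma adj_index[simp]: "i < dim_col A \<Longrightarrow> j < dim_row A \<Longrightarrow> mat_adjoint A $$ (i,j) = cnj (A $$ (j,i))"
  by (simp add: mat_adjoint_def mat_of_rows_def)
lemma adj_carrier[simp]: "A \<in> carrier_mat n m \<Longrightarrow> mat_adjoint A \<in> carrier_mat m n"
  unfolding carrier_mat_def by simp

lemma adj_mult: assumes "(A::complex mat) \<in> carrier_mat n m" "B \<in> carrier_mat m l"
  shows "mat_adjoint (A * B) = mat_adjoint B * mat_adjoint A"
proof (rule eq_matI)
  fix i j assume "i < dim_row (mat_adjoint B * mat_adjoint A)" "j < dim_col (mat_adjoint B * mat_adjoint A)"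
  hence ij: "i < l" "j < n" using assms by auto
  show "mat_adjoint (A * B) $$ (i, j) = (mat_adjoint B * mat_adjoint A) $$ (i, j)"
    using assms ij by (simp add: scalar_prod_def cnj_sum mult.commute)
qed (use assms in auto)

lemma adj_adj[simp]: "mat_adjoint (mat_adjoint (A::complex mat)) = A"
  by (rule eq_matI) auto

lemma adj_smult: "mat_adjoint (c \<cdot>\<^sub>m (A::complex mat)) = cnj c \<cdot>\<^sub>m mat_adjoint A"
  by (rule eq_matI) auto

lemma adj_one[simp]: "mat_adjoint (1\<^sub>m n :: complex mat) = 1\<^sub>m n"
  by (rule eq_matI) auto

lemma kron2_carrier[simp]: "kron2 A B \<in> carrier_mat 4 4" by (simp add: kron2_def)
lemma kron2_dims[simp]: "dim_row (kron2 A B) = 4" "dim_col (kron2 A B) = 4" by (simp_all add: kron2_def)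
lemma kron2_index: "r < 4 \<Longrightarrow> s < 4 \<Longrightarrow> kron2 A B $$ (r,s) = A $$ (r div 2, s div 2) * B $$ (r mod 2, s mod 2)"
  by (simp add: kron2_def)

lemma kron2_mult:
  assumes "A \<in> carrier_mat 2 2" "B \<in> carrier_mat 2 2" "C \<in> carrier_mat 2 2" "D \<in> carrier_mat 2 2"
  shows "kron2 A B * kron2 C D = kron2 (A * C) (B * D)"
proof (rule eq_matI)
  fix r s assume rs: "r < dim_row (kron2 (A * C) (B * D))" "s < dim_col (kron2 (A * C) (B * D))"
  hence r: "r < 4" and s: "s < 4" by (auto simp: kron2_def)
  have d2: "r div 2 < 2" "s div 2 < 2" "r mod 2 < 2" "s mod 2 < 2" using r s by auto
  have "(kron2 A B * kron2 C D) $$ (r, s) = (\<Sum>t<4. (A $$ (r div 2, t div 2) * B $$ (r mod 2, t mod 2)) * (C $$ (t div 2, s div 2) * D $$ (t mod 2, s mod 2)))"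
    using r s by (simp add: kron2_def scalar_prod_def lessThan_atLeast0)
  also have "\<dots> = (A $$ (r div 2, 0) * C $$ (0, s div 2) + A $$ (r div 2, 1) * C $$ (1, s div 2)) * (B $$ (r mod 2, 0) * D $$ (0, s mod 2) + B $$ (r mod 2, 1) * D $$ (1, s mod 2))"
    by (simp add: lessThan_atLeast0 sum4 ring_distribs mult_ac)
  also have "\<dots> = kron2 (A * C) (B * D) $$ (r, s)"
    using r s d2 assms by (simp add: kron2_index scalar_prod_def sum2)
  finally show "(kron2 A B * kron2 C D) $$ (r, s) = kron2 (A * C) (B * D) $$ (r, s)" .
qed (auto simp: kron2_def)

lemma kron2_adj: assumes "A \<in> carrier_mat 2 2" "B \<in> carrier_mat 2 2"
  shows "mat_adjoint (kron2 A B) = kron2 (mat_adjoint A) (mat_adjoint B)"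
proof (rule eq_matI)
  fix r s assume "r < dim_row (kron2 (mat_adjoint A) (mat_adjoint B))" "s < dim_col (kron2 (mat_adjoint A) (mat_adjoint B))"
  hence r: "r < 4" and s: "s < 4" by auto
  have d2: "r div 2 < 2" "s div 2 < 2" "r mod 2 < 2" "s mod 2 < 2" using r s by auto
  show "mat_adjoint (kron2 A B) $$ (r, s) = kron2 (mat_adjoint A) (mat_adjoint B) $$ (r, s)"
    using r s d2 assms by (simp add: kron2_index)
qed auto

lemma kron2_smult1: "A \<in> carrier_mat 2 2 \<Longrightarrow> kron2 (c \<cdot>\<^sub>m A) B = c \<cdot>\<^sub>m kron2 A B"
  by (rule eq_matI) (auto simp: kron2_index)
lemma kron2_smult2: "B \<in> carrier_mat 2 2 \<Longrightarrow> kron2 A (c \<cdot>\<^sub>m B) = c \<cdot>\<^sub>m kron2 A B"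
  by (rule eq_matI) (auto simp: kron2_index)
lemma kron2_one: "kron2 (1\<^sub>m 2) (1\<^sub>m 2) = 1\<^sub>m 4"
proof (rule eq_matI)
  fix r s assume "r < dim_row (1\<^sub>m 4 :: complex mat)" "s < dim_col (1\<^sub>m 4 :: complex mat)"
  hence r: "r < 4" and s: "s < 4" by auto
  have d2: "r div 2 < 2" "s div 2 < 2" "r mod 2 < 2" "s mod 2 < 2" using r s by auto
  have "(r div 2 = s div 2 \<and> r mod 2 = s mod 2) = (r = s)"
    by (metis div_mult_mod_eq)
  thus "kron2 (1\<^sub>m 2) (1\<^sub>m 2) $$ (r, s) = (1\<^sub>m 4 :: complex mat) $$ (r, s)"
    using r s d2 by (auto simp: kron2_index)
qed auto



fun pm :: "pauli \<Rightarrow> pauli \<Rightarrow> pauli" where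
  "pm PI q = q" | "pm p PI = p" | "pm PX PX = PI" | "pm PX PY = PZ" | "pm PX PZ = PY"
| "pm PY PX = PZ" | "pm PY PY = PI" | "pm PY PZ = PX" | "pm PZ PX = PY" | "pm PZ PY = PX" | "pm PZ PZ = PI"

fun ph :: "pauli \<Rightarrow> pauli \<Rightarrow> complex" where
  "ph PX PY = \<i>" | "ph PY PZ = \<i>" | "ph PZ PX = \<i>"
| "ph PY PX = - \<i>" | "ph PZ PY = - \<i>" | "ph PX PZ = - \<i>" | "ph _ _ = 1"

definition comm1 :: "pauli \<Rightarrow> pauli \<Rightarrow> bool" where
  "comm1 p q \<longleftrightarrow> p = PI \<or> q = PI \<or> p = q"

lemma pm_comm: "pm p q = pm q p" by (cases p; cases q; simp)
lemma pm_assoc: "pm (pm p q) r = pm p (pm q r)" by (cases p; cases q; cases r; simp)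
lemma pm_self[simp]: "pm p p = PI" by (cases p; simp)
lemma pm_PI2[simp]: "pm p PI = p" by (cases p; simp)
lemma pm_eq_PI: "pm p q = PI \<longleftrightarrow> p = q" by (cases p; cases q; simp)
lemma pm_cancel: "pm p (pm p q) = q" by (cases p; cases q; simp)
lemma ph_nz[simp]: "ph p q \<noteq> 0" by (cases p; cases q; simp)

definition pe :: "pauli \<Rightarrow> nat \<Rightarrow> nat \<Rightarrow> complex" where
  "pe p i j = (case p of
      PI \<Rightarrow> (if i = j then 1 else 0)
    | PX \<Rightarrow> (if i = j then 0 else 1)
    | PY \<Rightarrow> (if i = j then 0 else if i = 0 then - \<i> else \<i>)
    | PZ \<Rightarrow> (if i = j then (if i = 0 then 1 else -1) else 0))"

lemma pmat_dr: "dim_row (pmat p) = 2 \<and> dim_col (pmat p) = 2"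
  unfolding pmat_def mat_of_rows_list_def by (cases p) simp_all
lemma pmat_dims[simp]: "dim_row (pmat p) = 2" "dim_col (pmat p) = 2"
  using pmat_dr by auto
lemma pmat_carrier[simp]: "pmat p \<in> carrier_mat 2 2"
  unfolding carrier_mat_def by simp

lemma pmat_index: assumes "i < 2" "j < 2" shows "pmat p $$ (i,j) = pe p i j"
proof -
  have "i = 0 \<or> i = 1" "j = 0 \<or> j = 1" using assms by auto
  thus ?thesis unfolding pmat_def mat_of_rows_list_def pe_def by (cases p) auto
qed

lemma pmm_index: "i < 2 \<Longrightarrow> j < 2 \<Longrightarrow> (pmat p * pmat q) $$ (i,j) = pe p i 0 * pe q 0 j + pe p i 1 * pe q 1 j"
  by (simp add: mult2_index pmat_index del: index_mult_mat)
lemma psm_index: "i < 2 \<Longrightarrow> j < 2 \<Longrightarrow> (c \<cdot>\<^sub>m pmat p) $$ (i,j) = c * pe p i j"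
  by (simp add: pmat_index)
lemma pmat_mult: "pmat p * pmat q = ph p q \<cdot>\<^sub>m pmat (pm p q)"
  apply (rule eq2I)
  apply (rule mult_carrier_mat[OF pmat_carrier pmat_carrier])
  apply simp
  apply (simp_all only: pmm_index psm_index zero_less_numeral one_less_numeral_iff semiring_norm)
  by (cases p; cases q; simp add: pe_def)+

lemma pmat_adj[simp]: "mat_adjoint (pmat p) = pmat p"
  apply (rule eq2I)
  apply (rule adj_carrier[OF pmat_carrier])
  apply (rule pmat_carrier)
  apply (simp_all add: pmat_index)
  by (cases p; simp add: pe_def)+

lemma pmat_PI: "pmat PI = 1\<^sub>m 2"
  by (rule eq2I) (simp_all add: pmat_index pe_def)

lemma smult_smult[simp]: "a \<cdot>\<^sub>m (b \<cdot>\<^sub>m (A::complex mat)) = (a * b) \<cdot>\<^sub>m A"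
  by (rule eq_matI) auto
lemma smult_one1[simp]: "1 \<cdot>\<^sub>m (A::complex mat) = A"
  by (rule eq_matI) auto
lemma ph_self[simp]: "ph p p = 1" by (cases p) simp_all
lemma pmat_sq[simp]: "pmat p * pmat p = 1\<^sub>m 2"
  by (simp add: pmat_mult pmat_PI)

lemma pmat_comm: "pmat p * pmat q = (if comm1 p q then 1 else -1) \<cdot>\<^sub>m (pmat q * pmat p)"
  by (cases p; cases q; simp add: pmat_mult comm1_def)

lemma mat_eq_index: "A = B \<Longrightarrow> A $$ (i,j) = B $$ (i,j)" by simp

lemma pmat_unique: assumes "c \<noteq> 0" "c \<cdot>\<^sub>m pmat p = d \<cdot>\<^sub>m pmat q" shows "p = q"
proof -
  have e: "c * pe p i j = d * pe q i j" if "i < 2" "j < 2" for i j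
  proof -
    have "(c \<cdot>\<^sub>m pmat p) $$ (i,j) = (d \<cdot>\<^sub>m pmat q) $$ (i,j)" using assms(2) by simp
    thus ?thesis using that by (simp add: pmat_index)
  qed
  show ?thesis using e[of 0 0] e[of 0 1] e[of 1 0] e[of 1 1] assms(1)
    by (cases p; cases q; simp add: pe_def)
qed


definition Kp :: "pauli \<times> pauli \<Rightarrow> complex mat" where
  "Kp x = kron2 (pmat (fst x)) (pmat (snd x))"
definition pm2 :: "pauli \<times> pauli \<Rightarrow> pauli \<times> pauli \<Rightarrow> pauli \<times> pauli" where
  "pm2 x y = (pm (fst x) (fst y), pm (snd x) (snd y))"
definition ph2 :: "pauli \<times> pauli \<Rightarrow> pauli \<times> pauli \<Rightarrow> complex" where
  "ph2 x y = ph (fst x) (fst y) * ph (snd x) (snd y)"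
definition comm2 :: "pauli \<times> pauli \<Rightarrow> pauli \<times> pauli \<Rightarrow> bool" where
  "comm2 x y \<longleftrightarrow> (comm1 (fst x) (fst y) \<longleftrightarrow> comm1 (snd x) (snd y))"
definition sg :: "pauli \<times> pauli \<Rightarrow> pauli \<times> pauli \<Rightarrow> complex" where
  "sg x y = (if comm2 x y then 1 else -1)"

lemma Kp_carrier[simp]: "Kp x \<in> carrier_mat 4 4" by (simp add: Kp_def)
lemma Kp_dims[simp]: "dim_row (Kp x) = 4" "dim_col (Kp x) = 4" by (simp_all add: Kp_def)
lemma ph2_nz[simp]: "ph2 x y \<noteq> 0" by (simp add: ph2_def)
lemma sg_nz[simp]: "sg x y \<noteq> 0" by (simp add: sg_def)
lemma sg_sq[simp]: "sg x y * sg x y = 1" by (simp add: sg_def)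

lemma Kp_mult: "Kp x * Kp y = ph2 x y \<cdot>\<^sub>m Kp (pm2 x y)"
  by (simp add: Kp_def kron2_mult pmat_mult kron2_smult1 kron2_smult2 ph2_def pm2_def mult.commute)

lemma Kp_adj[simp]: "mat_adjoint (Kp x) = Kp x"
  by (simp add: Kp_def kron2_adj)

lemma Kp_sq[simp]: "Kp x * Kp x = 1\<^sub>m 4"
  by (simp add: Kp_def kron2_mult kron2_one)

lemma Kp_one: "Kp (PI, PI) = 1\<^sub>m 4"
  by (simp add: Kp_def pmat_PI kron2_one)

lemma pm2_self[simp]: "pm2 x x = (PI, PI)" by (simp add: pm2_def)
lemma pm2_comm: "pm2 x y = pm2 y x" by (simp add: pm2_def pm_comm)
lemma pm2_assoc: "pm2 (pm2 x y) z = pm2 x (pm2 y z)" by (simp add: pm2_def pm_assoc)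
lemma pm2_eq_PI: "pm2 x y = (PI, PI) \<longleftrightarrow> x = y" by (cases x; cases y) (simp add: pm2_def pm_eq_PI)
lemma pm2_PI[simp]: "pm2 (PI,PI) x = x" "pm2 x (PI,PI) = x" by (simp_all add: pm2_def)

lemma pmm_carrier[simp]: "pmat p * pmat q \<in> carrier_mat 2 2"
  by (rule mult_carrier_mat[OF pmat_carrier pmat_carrier])

lemma Kp_comm: "Kp x * Kp y = sg x y \<cdot>\<^sub>m (Kp y * Kp x)"
proof -
  have "Kp x * Kp y = kron2 (pmat (fst x) * pmat (fst y)) (pmat (snd x) * pmat (snd y))"
    by (simp add: Kp_def kron2_mult)
  also have "\<dots> = kron2 ((if comm1 (fst x) (fst y) then 1 else -1) \<cdot>\<^sub>m (pmat (fst y) * pmat (fst x)))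
                       ((if comm1 (snd x) (snd y) then 1 else -1) \<cdot>\<^sub>m (pmat (snd y) * pmat (snd x)))"
    by (simp only: pmat_comm[of "fst x"] pmat_comm[of "snd x"])
  also have "\<dots> = sg x y \<cdot>\<^sub>m (Kp y * Kp x)"
    by (simp add: kron2_smult1 kron2_smult2 Kp_def kron2_mult sg_def comm2_def)
  finally show ?thesis .
qed

lemma kron_pe_index: "r < 4 \<Longrightarrow> s < 4 \<Longrightarrow> Kp x $$ (r,s) = pe (fst x) (r div 2) (s div 2) * pe (snd x) (r mod 2) (s mod 2)"
  by (simp add: Kp_def kron2_index pmat_index)

lemma Kp_unique1: assumes "c \<noteq> 0" "c \<cdot>\<^sub>m 1\<^sub>m 4 = e \<cdot>\<^sub>m Kp z" shows "z = (PI, PI)"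
proof -
  have en: "c * (if r = s then 1 else 0) = e * (pe (fst z) (r div 2) (s div 2) * pe (snd z) (r mod 2) (s mod 2))"
    if "r < 4" "s < 4" for r s
  proof -
    have "(c \<cdot>\<^sub>m 1\<^sub>m 4) $$ (r,s) = (e \<cdot>\<^sub>m Kp z) $$ (r,s)" using assms(2) by simp
    thus ?thesis using that by (simp add: kron_pe_index)
  qed
  obtain p q where z: "z = (p, q)" by (cases z)
  show ?thesis using en[of 0 0] en[of 1 1] en[of 2 2] assms(1) unfolding z
    by (cases p; cases q; simp add: pe_def)
qed

lemma Kp_unique: assumes "c \<noteq> 0" "c \<cdot>\<^sub>m Kp x = d \<cdot>\<^sub>m Kp y" shows "x = y"
proof -
  have "(c \<cdot>\<^sub>m Kp x) * Kp x = (d \<cdot>\<^sub>m Kp y) * Kp x" using assms(2) by simp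
  hence "c \<cdot>\<^sub>m 1\<^sub>m 4 = (d * ph2 y x) \<cdot>\<^sub>m Kp (pm2 y x)"
    by (simp add: mult_smult_assoc_mat[of _ 4 4 _ 4] Kp_mult)
  from Kp_unique1[OF assms(1) this] show ?thesis by (simp add: pm2_eq_PI)
qed

lemma Kp_nz: "c \<noteq> 0 \<Longrightarrow> c \<cdot>\<^sub>m Kp x \<noteq> 0\<^sub>m 4 4"
proof
  assume "c \<noteq> 0" "c \<cdot>\<^sub>m Kp x = 0\<^sub>m 4 4"
  have "(c \<cdot>\<^sub>m Kp x) * Kp x = c \<cdot>\<^sub>m 1\<^sub>m 4" by (simp add: mult_smult_assoc_mat[of _ 4 4 _ 4])
  with \<open>c \<cdot>\<^sub>m Kp x = 0\<^sub>m 4 4\<close> have "c \<cdot>\<^sub>m 1\<^sub>m 4 = (0\<^sub>m 4 4 :: complex mat)"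
    by (metis left_mult_zero_mat Kp_carrier)
  hence "(c \<cdot>\<^sub>m 1\<^sub>m 4) $$ (0,0) = (0\<^sub>m 4 4 :: complex mat) $$ (0,0)" by simp
  with \<open>c \<noteq> 0\<close> show False by simp
qed

lemma unitaryD: assumes "unitary_mat n U"
  shows "U \<in> carrier_mat n n" "U * mat_adjoint U = 1\<^sub>m n" "mat_adjoint U * U = 1\<^sub>m n"
proof -
  show c: "U \<in> carrier_mat n n" "U * mat_adjoint U = 1\<^sub>m n" using assms unfolding unitary_mat_def by auto
  show "mat_adjoint U * U = 1\<^sub>m n"
    by (rule mat_mult_left_right_inverse[OF c(1) adj_carrier[OF c(1)] c(2)])
qed

lemma mult_carrier4[simp]: "A \<in> carrier_mat 4 4 \<Longrightarrow> B \<in> carrier_mat 4 4 \<Longrightarrow> A * B \<in> carrier_mat 4 4"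
  by (rule mult_carrier_mat)
lemma mult_carrier2[simp]: "A \<in> carrier_mat 2 2 \<Longrightarrow> B \<in> carrier_mat 2 2 \<Longrightarrow> A * B \<in> carrier_mat 2 2"
  by (rule mult_carrier_mat)

lemma uni_cancel1: assumes "unitary_mat n G" "X \<in> carrier_mat n k"
  shows "mat_adjoint G * (G * X) = X"
proof -
  note u = unitaryD[OF assms(1)]
  have "mat_adjoint G * (G * X) = (mat_adjoint G * G) * X"
    by (rule assoc_mult_mat[OF adj_carrier[OF u(1)] u(1) assms(2), symmetric])
  also have "\<dots> = X" using u(3) assms(2) by simp
  finally show ?thesis .
qed

lemma uni_cancel2: assumes "unitary_mat n G" "X \<in> carrier_mat n k"
  shows "G * (mat_adjoint G * X) = X"
proof -
  note u = unitaryD[OF assms(1)]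
  have "G * (mat_adjoint G * X) = (G * mat_adjoint G) * X"
    by (rule assoc_mult_mat[OF u(1) adj_carrier[OF u(1)] assms(2), symmetric])
  also have "\<dots> = X" using u(2) assms(2) by simp
  finally show ?thesis .
qed

lemma smult_zero1: "0 \<cdot>\<^sub>m (A::complex mat) = 0\<^sub>m (dim_row A) (dim_col A)"
  by (rule eq_matI) auto

lemma conj_mult: assumes "unitary_mat n G" "A \<in> carrier_mat n n" "B \<in> carrier_mat n n"
  shows "G * (A * B) * mat_adjoint G = (G * A * mat_adjoint G) * (G * B * mat_adjoint G)"
proof -
  note u = unitaryD[OF assms(1)]
  have "(G * A * mat_adjoint G) * (G * B * mat_adjoint G) = G * (A * (mat_adjoint G * (G * (B * mat_adjoint G))))"
    using u assms by (simp add: assoc_mult_mat[of _ n n _ n _ n])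
  also have "\<dots> = G * (A * (B * mat_adjoint G))"
    using u assms by (simp add: uni_cancel1[OF assms(1), of "B * mat_adjoint G" n])
  also have "\<dots> = G * (A * B) * mat_adjoint G"
    using u assms by (simp add: assoc_mult_mat[of _ n n _ n _ n])
  finally show ?thesis by simp
qed

lemma conj_smult: assumes "G \<in> carrier_mat n n" "A \<in> carrier_mat n n"
  shows "G * (c \<cdot>\<^sub>m A) * mat_adjoint G = c \<cdot>\<^sub>m (G * A * mat_adjoint G)"
  using assms by (simp add: mult_smult_distrib[of _ n n _ n] mult_smult_assoc_mat[of _ n n _ n])

lemma conj_zero: assumes "unitary_mat n G" "M \<in> carrier_mat n n" "G * M * mat_adjoint G = 0\<^sub>m n n"
  shows "M = 0\<^sub>m n n"
proof -
  note u = unitaryD[OF assms(1)]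
  have "mat_adjoint G * (G * M * mat_adjoint G) * G = mat_adjoint G * (G * (M * (mat_adjoint G * G)))"
    using u assms(2) by (simp add: assoc_mult_mat[of _ n n _ n _ n])
  also have "\<dots> = M" using u assms(2) by (simp add: uni_cancel1[OF assms(1), of M n])
  finally have "M = mat_adjoint G * (G * M * mat_adjoint G) * G" by simp
  also have "\<dots> = 0\<^sub>m n n" using assms(3) u by simp
  finally show ?thesis .
qed

lemma clif2_unitary: "clifford2 G \<Longrightarrow> unitary_mat 4 G" by (simp add: clifford2_def)
lemma clif2_carrier: "clifford2 G \<Longrightarrow> G \<in> carrier_mat 4 4" by (simp add: clifford2_def unitary_mat_def)

lemma clif2_img: assumes "clifford2 G"
  shows "\<exists>c. c \<noteq> 0 \<and> G * Kp x * mat_adjoint G = c \<cdot>\<^sub>m Kp (gate_img G x)"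
proof -
  have ex: "\<exists>pq' c. G * kron2 (pmat (fst x)) (pmat (snd x)) * mat_adjoint G
                                 = c \<cdot>\<^sub>m kron2 (pmat (fst pq')) (pmat (snd pq'))"
    using assms unfolding clifford2_def by (metis fst_conv snd_conv)
  have "\<exists>c. G * kron2 (pmat (fst x)) (pmat (snd x)) * mat_adjoint G
                                 = c \<cdot>\<^sub>m kron2 (pmat (fst (gate_img G x))) (pmat (snd (gate_img G x)))"
    unfolding gate_img_def by (rule someI_ex) (use ex in auto)
  then obtain c where c: "G * Kp x * mat_adjoint G = c \<cdot>\<^sub>m Kp (gate_img G x)" unfolding Kp_def by blast
  have "c \<noteq> 0"
  proof
    assume "c = 0"
    hence "G * Kp x * mat_adjoint G = 0\<^sub>m 4 4" using c by (simp add: smult_zero1)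
    hence "Kp x = 0\<^sub>m 4 4" by (rule conj_zero[OF clif2_unitary[OF assms] Kp_carrier])
    hence "1 \<cdot>\<^sub>m Kp x = 0\<^sub>m 4 4" by simp
    with Kp_nz[of 1 x] show False by simp
  qed
  with c show ?thesis by blast
qed

lemma clif2_img_unique: assumes "clifford2 G" "G * Kp x * mat_adjoint G = c \<cdot>\<^sub>m Kp y" "c \<noteq> 0"
  shows "gate_img G x = y"
proof -
  obtain d where d: "d \<noteq> 0" "G * Kp x * mat_adjoint G = d \<cdot>\<^sub>m Kp (gate_img G x)" using clif2_img[OF assms(1)] by blast
  have "d \<cdot>\<^sub>m Kp (gate_img G x) = c \<cdot>\<^sub>m Kp y" using d assms(2) by simp
  from Kp_unique[OF d(1) this] show ?thesis .
qed

lemma gate_img_mult: assumes "clifford2 G"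
  shows "gate_img G (pm2 x y) = pm2 (gate_img G x) (gate_img G y)"
proof -
  note u = clif2_unitary[OF assms] note uc = unitaryD[OF u]
  obtain cx where cx: "cx \<noteq> 0" "G * Kp x * mat_adjoint G = cx \<cdot>\<^sub>m Kp (gate_img G x)" using clif2_img[OF assms] by blast
  obtain cy where cy: "cy \<noteq> 0" "G * Kp y * mat_adjoint G = cy \<cdot>\<^sub>m Kp (gate_img G y)" using clif2_img[OF assms] by blast
  have "G * (Kp x * Kp y) * mat_adjoint G = (cx \<cdot>\<^sub>m Kp (gate_img G x)) * (cy \<cdot>\<^sub>m Kp (gate_img G y))"
    using conj_mult[OF u Kp_carrier Kp_carrier] cx cy by simp
  also have "\<dots> = (cx * cy * ph2 (gate_img G x) (gate_img G y)) \<cdot>\<^sub>m Kp (pm2 (gate_img G x) (gate_img G y))"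
    by (simp add: mult_smult_assoc_mat[of _ 4 4 _ 4] mult_smult_distrib[of _ 4 4 _ 4] Kp_mult mult_ac)
  finally have e1: "G * (Kp x * Kp y) * mat_adjoint G = (cx * cy * ph2 (gate_img G x) (gate_img G y)) \<cdot>\<^sub>m Kp (pm2 (gate_img G x) (gate_img G y))" .
  have "G * (Kp x * Kp y) * mat_adjoint G = ph2 x y \<cdot>\<^sub>m (G * Kp (pm2 x y) * mat_adjoint G)"
    using uc by (simp add: Kp_mult conj_smult[of _ 4])
  with e1 have e2: "ph2 x y \<cdot>\<^sub>m (G * Kp (pm2 x y) * mat_adjoint G) = (cx * cy * ph2 (gate_img G x) (gate_img G y)) \<cdot>\<^sub>m Kp (pm2 (gate_img G x) (gate_img G y))"
    by simp
  have "G * Kp (pm2 x y) * mat_adjoint G = inverse (ph2 x y) \<cdot>\<^sub>m (ph2 x y \<cdot>\<^sub>m (G * Kp (pm2 x y) * mat_adjoint G))"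
    by simp
  also have "\<dots> = (inverse (ph2 x y) * (cx * cy * ph2 (gate_img G x) (gate_img G y))) \<cdot>\<^sub>m Kp (pm2 (gate_img G x) (gate_img G y))"
    by (simp only: e2 smult_smult)
  finally have "G * Kp (pm2 x y) * mat_adjoint G = (inverse (ph2 x y) * (cx * cy * ph2 (gate_img G x) (gate_img G y))) \<cdot>\<^sub>m Kp (pm2 (gate_img G x) (gate_img G y))" .
  from clif2_img_unique[OF assms this] cx cy show ?thesis by simp
qed


lemma conj_inv: assumes "unitary_mat n G" "M \<in> carrier_mat n n"
  shows "mat_adjoint G * (G * M * mat_adjoint G) * G = M"
proof -
  note u = unitaryD[OF assms(1)]
  have "mat_adjoint G * (G * M * mat_adjoint G) * G = mat_adjoint G * (G * (M * (mat_adjoint G * G)))"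
    using u assms(2) by (simp add: assoc_mult_mat[of _ n n _ n _ n])
  also have "\<dots> = M" using u assms(2) by (simp add: uni_cancel1[OF assms(1), of M n])
  finally show ?thesis .
qed

lemma smult_Kp_cancel: assumes "a \<cdot>\<^sub>m Kp w = b \<cdot>\<^sub>m Kp w" shows "a = b"
proof -
  have "(a \<cdot>\<^sub>m Kp w) * Kp w = (b \<cdot>\<^sub>m Kp w) * Kp w" using assms by simp
  hence "a \<cdot>\<^sub>m 1\<^sub>m 4 = (b \<cdot>\<^sub>m 1\<^sub>m 4 :: complex mat)" by (simp add: mult_smult_assoc_mat[of _ 4 4 _ 4])
  hence "(a \<cdot>\<^sub>m 1\<^sub>m 4) $$ (0,0) = (b \<cdot>\<^sub>m 1\<^sub>m 4 :: complex mat) $$ (0,0)" by simp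
  thus ?thesis by simp
qed

lemma gate_img_PI: assumes "clifford2 G" shows "gate_img G (PI,PI) = (PI,PI)"
proof -
  note uc = unitaryD[OF clif2_unitary[OF assms]]
  have "G * Kp (PI,PI) * mat_adjoint G = 1 \<cdot>\<^sub>m Kp (PI,PI)" using uc by (simp add: Kp_one)
  from clif2_img_unique[OF assms this] show ?thesis by simp
qed

lemma gate_img_zero: assumes "clifford2 G" "gate_img G z = (PI,PI)" shows "z = (PI,PI)"
proof -
  note u = clif2_unitary[OF assms(1)] note uc = unitaryD[OF u]
  obtain c where c: "c \<noteq> 0" "G * Kp z * mat_adjoint G = c \<cdot>\<^sub>m Kp (gate_img G z)" using clif2_img[OF assms(1)] by blast
  have "Kp z = mat_adjoint G * (G * Kp z * mat_adjoint G) * G" using conj_inv[OF u Kp_carrier] by simp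
  also have "\<dots> = mat_adjoint G * (c \<cdot>\<^sub>m 1\<^sub>m 4) * G" using c assms(2) by (simp add: Kp_one)
  also have "\<dots> = c \<cdot>\<^sub>m (mat_adjoint G * G)" using uc
    by (simp add: mult_smult_distrib[of _ 4 4 _ 4] mult_smult_assoc_mat[of _ 4 4 _ 4])
  also have "\<dots> = c \<cdot>\<^sub>m 1\<^sub>m 4" using uc by simp
  finally have "c \<cdot>\<^sub>m 1\<^sub>m 4 = 1 \<cdot>\<^sub>m Kp z" by simp
  from Kp_unique1[OF c(1) this] show ?thesis .
qed

lemma gate_img_inj: assumes "clifford2 G" "gate_img G x = gate_img G y" shows "x = y"
proof -
  have "gate_img G (pm2 x y) = (PI,PI)" using gate_img_mult[OF assms(1)] assms(2) by simp
  from gate_img_zero[OF assms(1) this] show ?thesis by (simp add: pm2_eq_PI)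
qed

lemma gate_img_comm: assumes "clifford2 G" shows "comm2 (gate_img G x) (gate_img G y) = comm2 x y"
proof -
  note u = clif2_unitary[OF assms] note uc = unitaryD[OF u]
  obtain cx where cx: "cx \<noteq> 0" "G * Kp x * mat_adjoint G = cx \<cdot>\<^sub>m Kp (gate_img G x)" using clif2_img[OF assms] by blast
  obtain cy where cy: "cy \<noteq> 0" "G * Kp y * mat_adjoint G = cy \<cdot>\<^sub>m Kp (gate_img G y)" using clif2_img[OF assms] by blast
  define gx where "gx = gate_img G x"
  define gy where "gy = gate_img G y"
  have e1: "G * (Kp x * Kp y) * mat_adjoint G = (cx * cy * sg gx gy * ph2 gy gx) \<cdot>\<^sub>m Kp (pm2 gy gx)"
  proof -
    have "G * (Kp x * Kp y) * mat_adjoint G = (cx \<cdot>\<^sub>m Kp gx) * (cy \<cdot>\<^sub>m Kp gy)"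
      using conj_mult[OF u Kp_carrier Kp_carrier] cx cy gx_def gy_def by simp
    also have "\<dots> = (cx * cy) \<cdot>\<^sub>m (Kp gx * Kp gy)"
      by (simp add: mult_smult_assoc_mat[of _ 4 4 _ 4] mult_smult_distrib[of _ 4 4 _ 4] mult_ac)
    also have "\<dots> = (cx * cy * sg gx gy * ph2 gy gx) \<cdot>\<^sub>m Kp (pm2 gy gx)"
      by (subst Kp_comm[of gx gy]) (simp add: Kp_mult mult_ac)
    finally show ?thesis .
  qed
  have e2: "G * (Kp x * Kp y) * mat_adjoint G = (sg x y * cx * cy * ph2 gy gx) \<cdot>\<^sub>m Kp (pm2 gy gx)"
  proof -
    have "G * (Kp x * Kp y) * mat_adjoint G = sg x y \<cdot>\<^sub>m (G * (Kp y * Kp x) * mat_adjoint G)"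
      using uc by (simp add: Kp_comm[of x y] conj_smult[of _ 4])
    also have "\<dots> = sg x y \<cdot>\<^sub>m ((cy \<cdot>\<^sub>m Kp gy) * (cx \<cdot>\<^sub>m Kp gx))"
      using conj_mult[OF u Kp_carrier Kp_carrier] cx cy gx_def gy_def by simp
    also have "\<dots> = (sg x y * cx * cy * ph2 gy gx) \<cdot>\<^sub>m Kp (pm2 gy gx)"
      by (simp add: mult_smult_assoc_mat[of _ 4 4 _ 4] mult_smult_distrib[of _ 4 4 _ 4] Kp_mult mult_ac)
    finally show ?thesis .
  qed
  from e1 e2 have "cx * cy * sg gx gy * ph2 gy gx = sg x y * cx * cy * ph2 gy gx"
    using smult_Kp_cancel by metis
  hence "sg gx gy = sg x y" using cx cy by simp
  thus ?thesis unfolding gx_def gy_def sg_def by (auto split: if_splits)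
qed

lemma clif2_mult: assumes "clifford2 A" "clifford2 B"
  shows "clifford2 (A * B)" "gate_img (A * B) x = gate_img A (gate_img B x)"
proof -
  note ua = clif2_unitary[OF assms(1)] note uca = unitaryD[OF ua]
  note ub = clif2_unitary[OF assms(2)] note ucb = unitaryD[OF ub]
  have uab: "unitary_mat 4 (A * B)"
  proof -
    have "(A * B) * mat_adjoint (A * B) = A * (B * (mat_adjoint B * mat_adjoint A))"
      using uca ucb by (simp add: adj_mult[of _ 4 4 _ 4] assoc_mult_mat[of _ 4 4 _ 4 _ 4])
    also have "\<dots> = 1\<^sub>m 4" using uca ucb by (simp add: uni_cancel2[OF ub, of _ 4])
    finally show ?thesis unfolding unitary_mat_def using uca ucb by auto
  qed
  have conj: "\<exists>c. c \<noteq> 0 \<and> (A * B) * Kp y * mat_adjoint (A * B) = c \<cdot>\<^sub>m Kp (gate_img A (gate_img B y))" for y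
  proof -
    obtain cb where cb: "cb \<noteq> 0" "B * Kp y * mat_adjoint B = cb \<cdot>\<^sub>m Kp (gate_img B y)" using clif2_img[OF assms(2)] by blast
    obtain ca where ca: "ca \<noteq> 0" "A * Kp (gate_img B y) * mat_adjoint A = ca \<cdot>\<^sub>m Kp (gate_img A (gate_img B y))" using clif2_img[OF assms(1)] by blast
    have "(A * B) * Kp y * mat_adjoint (A * B) = A * (B * Kp y * mat_adjoint B) * mat_adjoint A"
      using uca ucb by (simp add: adj_mult[of _ 4 4 _ 4] assoc_mult_mat[of _ 4 4 _ 4 _ 4])
    also have "\<dots> = cb \<cdot>\<^sub>m (A * Kp (gate_img B y) * mat_adjoint A)" using cb uca by (simp add: conj_smult[of _ 4])
    also have "\<dots> = (cb * ca) \<cdot>\<^sub>m Kp (gate_img A (gate_img B y))" using ca by simp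
    finally show ?thesis using ca cb by (intro exI[of _ "cb * ca"]) simp
  qed
  show c2: "clifford2 (A * B)" unfolding clifford2_def
  proof (intro conjI allI)
    show "unitary_mat 4 (A * B)" by (rule uab)
    fix p q
    obtain c where "(A * B) * Kp (p,q) * mat_adjoint (A * B) = c \<cdot>\<^sub>m Kp (gate_img A (gate_img B (p,q)))" using conj by blast
    thus "\<exists>p' q' c. A * B * kron2 (pmat p) (pmat q) * mat_adjoint (A * B) = c \<cdot>\<^sub>m kron2 (pmat p') (pmat q')"
      unfolding Kp_def by auto
  qed
  obtain c where "c \<noteq> 0" "(A * B) * Kp x * mat_adjoint (A * B) = c \<cdot>\<^sub>m Kp (gate_img A (gate_img B x))" using conj by blast
  from clif2_img_unique[OF c2 this(2) this(1)] show "gate_img (A * B) x = gate_img A (gate_img B x)" .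
qed

definition img1 :: "complex mat \<Rightarrow> pauli \<Rightarrow> pauli" where
  "img1 a p = (SOME q. \<exists>c. a * pmat p * mat_adjoint a = c \<cdot>\<^sub>m pmat q)"

lemma clif1_unitary: "clifford1 a \<Longrightarrow> unitary_mat 2 a" by (simp add: clifford1_def)

lemma pmat_nz: "c \<noteq> 0 \<Longrightarrow> c \<cdot>\<^sub>m pmat p \<noteq> 0\<^sub>m 2 2"
proof
  assume "c \<noteq> 0" "c \<cdot>\<^sub>m pmat p = 0\<^sub>m 2 2"
  have "(c \<cdot>\<^sub>m pmat p) * pmat p = c \<cdot>\<^sub>m 1\<^sub>m 2" by (simp add: mult_smult_assoc_mat[of _ 2 2 _ 2])
  with \<open>c \<cdot>\<^sub>m pmat p = 0\<^sub>m 2 2\<close> have "c \<cdot>\<^sub>m 1\<^sub>m 2 = (0\<^sub>m 2 2 :: complex mat)"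
    by (metis left_mult_zero_mat pmat_carrier)
  hence "(c \<cdot>\<^sub>m 1\<^sub>m 2) $$ (0,0) = (0\<^sub>m 2 2 :: complex mat) $$ (0,0)" by simp
  with \<open>c \<noteq> 0\<close> show False by simp
qed

lemma clif1_img: assumes "clifford1 a"
  shows "\<exists>c. c \<noteq> 0 \<and> a * pmat p * mat_adjoint a = c \<cdot>\<^sub>m pmat (img1 a p)"
proof -
  have ex: "\<exists>q c. a * pmat p * mat_adjoint a = c \<cdot>\<^sub>m pmat q" using assms unfolding clifford1_def by blast
  have "\<exists>c. a * pmat p * mat_adjoint a = c \<cdot>\<^sub>m pmat (img1 a p)"
    unfolding img1_def by (rule someI_ex) (use ex in auto)
  then obtain c where c: "a * pmat p * mat_adjoint a = c \<cdot>\<^sub>m pmat (img1 a p)" by blast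
  have "c \<noteq> 0"
  proof
    assume "c = 0"
    hence "a * pmat p * mat_adjoint a = 0\<^sub>m 2 2" using c by (simp add: smult_zero1)
    hence "pmat p = 0\<^sub>m 2 2" by (rule conj_zero[OF clif1_unitary[OF assms] pmat_carrier])
    hence "1 \<cdot>\<^sub>m pmat p = 0\<^sub>m 2 2" by simp
    with pmat_nz[of 1 p] show False by simp
  qed
  with c show ?thesis by blast
qed

lemma clif1_img_unique: assumes "clifford1 a" "a * pmat p * mat_adjoint a = c \<cdot>\<^sub>m pmat q" "c \<noteq> 0"
  shows "img1 a p = q"
proof -
  obtain d where d: "d \<noteq> 0" "a * pmat p * mat_adjoint a = d \<cdot>\<^sub>m pmat (img1 a p)" using clif1_img[OF assms(1)] by blast
  have "d \<cdot>\<^sub>m pmat (img1 a p) = c \<cdot>\<^sub>m pmat q" using d assms(2) by simp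
  from pmat_unique[OF d(1) this] show ?thesis .
qed

lemma kron_clif: assumes "clifford1 a" "clifford1 b"
  shows "clifford2 (kron2 a b)" "gate_img (kron2 a b) x = (img1 a (fst x), img1 b (snd x))"
proof -
  note ua = unitaryD[OF clif1_unitary[OF assms(1)]]
  note ub = unitaryD[OF clif1_unitary[OF assms(2)]]
  have uk: "unitary_mat 4 (kron2 a b)" unfolding unitary_mat_def
    using ua ub by (simp add: kron2_adj kron2_mult kron2_one)
  have conj: "\<exists>c. c \<noteq> 0 \<and> kron2 a b * Kp y * mat_adjoint (kron2 a b) = c \<cdot>\<^sub>m Kp (img1 a (fst y), img1 b (snd y))" for y
  proof -
    obtain c1 where c1: "c1 \<noteq> 0" "a * pmat (fst y) * mat_adjoint a = c1 \<cdot>\<^sub>m pmat (img1 a (fst y))" using clif1_img[OF assms(1)] by blast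
    obtain c2 where c2: "c2 \<noteq> 0" "b * pmat (snd y) * mat_adjoint b = c2 \<cdot>\<^sub>m pmat (img1 b (snd y))" using clif1_img[OF assms(2)] by blast
    have "kron2 a b * Kp y * mat_adjoint (kron2 a b) = kron2 (a * pmat (fst y) * mat_adjoint a) (b * pmat (snd y) * mat_adjoint b)"
      using ua ub by (simp add: Kp_def kron2_adj kron2_mult)
    also have "\<dots> = (c1 * c2) \<cdot>\<^sub>m Kp (img1 a (fst y), img1 b (snd y))"
      using c1 c2 by (simp add: Kp_def kron2_smult1 kron2_smult2 mult_ac)
    finally show ?thesis using c1 c2 by (intro exI[of _ "c1 * c2"]) simp
  qed
  show c2: "clifford2 (kron2 a b)" unfolding clifford2_def
  proof (intro conjI allI)
    show "unitary_mat 4 (kron2 a b)" by (rule uk)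
    fix p q
    obtain c where "kron2 a b * Kp (p,q) * mat_adjoint (kron2 a b) = c \<cdot>\<^sub>m Kp (img1 a p, img1 b q)" using conj[of "(p,q)"] by auto
    thus "\<exists>p' q' c. kron2 a b * kron2 (pmat p) (pmat q) * mat_adjoint (kron2 a b) = c \<cdot>\<^sub>m kron2 (pmat p') (pmat q')"
      unfolding Kp_def by auto
  qed
  obtain c where "c \<noteq> 0" "kron2 a b * Kp x * mat_adjoint (kron2 a b) = c \<cdot>\<^sub>m Kp (img1 a (fst x), img1 b (snd x))" using conj by blast
  from clif2_img_unique[OF c2 this(2) this(1)] show "gate_img (kron2 a b) x = (img1 a (fst x), img1 b (snd x))" .
qed

definition pmf :: "(int \<Rightarrow> pauli) \<Rightarrow> (int \<Rightarrow> pauli) \<Rightarrow> (int \<Rightarrow> pauli)" where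
  "pmf P Q = (\<lambda>j. pm (P j) (Q j))"

definition lw :: "int \<Rightarrow> (int \<Rightarrow> pauli) \<Rightarrow> bool" where
  "lw i P \<longleftrightarrow> (\<forall>j>i. P j = PI)"

lemma gate_img_mult': assumes "clifford2 G"
  shows "gate_img G (pm p1 p2, pm q1 q2) = (pm (fst (gate_img G (p1,q1))) (fst (gate_img G (p2,q2))),
                                          pm (snd (gate_img G (p1,q1))) (snd (gate_img G (p2,q2))))"
  using gate_img_mult[OF assms, of "(p1,q1)" "(p2,q2)"] by (simp add: pm2_def)

lemma layer_mult: assumes "\<forall>j. clifford2 (C j)"
  shows "layer C par (pmf P Q) = pmf (layer C par P) (layer C par Q)"
  unfolding layer_def pmf_def using gate_img_mult'[OF assms[rule_format]] by (auto simp: fun_eq_iff)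

lemma U_mult: assumes "\<forall>j. clifford2 (C j)"
  shows "U_act C (pmf P Q) = pmf (U_act C P) (U_act C Q)"
  unfolding U_act_def by (simp add: layer_mult[OF assms])

lemma Upow_mult: assumes "\<forall>j. clifford2 (C j)"
  shows "(U_act C ^^ t) (pmf P Q) = pmf ((U_act C ^^ t) P) ((U_act C ^^ t) Q)"
  by (induction t) (simp_all add: U_mult[OF assms])

lemma layer_PI: assumes "\<forall>j. clifford2 (C j)" shows "layer C par (\<lambda>_. PI) = (\<lambda>_. PI)"
  unfolding layer_def using gate_img_PI[OF assms[rule_format]] by (auto simp: fun_eq_iff)

lemma Upow_PI: assumes "\<forall>j. clifford2 (C j)" shows "(U_act C ^^ t) (\<lambda>_. PI) = (\<lambda>_. PI)"
  by (induction t) (simp_all add: U_act_def layer_PI[OF assms])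

lemma pmf_PI[simp]: "pmf P (\<lambda>_. PI) = P" by (simp add: pmf_def)

lemma lw_pmf: "lw c x \<Longrightarrow> lw c z \<Longrightarrow> lw c (pmf x z)" by (simp add: lw_def pmf_def)
lemma lw_mono: "lw i x \<Longrightarrow> i \<le> c \<Longrightarrow> lw c x" by (simp add: lw_def)

definition R1 :: "complex mat \<Rightarrow> bool" where
  "R1 G \<longleftrightarrow> (\<forall>a1 a2. snd (gate_img G (a1,PI)) \<noteq> PI \<longrightarrow> snd (gate_img G (a2,PI)) \<noteq> PI \<longrightarrow>
                  snd (gate_img G (a1,PI)) = snd (gate_img G (a2,PI)))"

definition Psi :: "(int \<Rightarrow> complex mat) \<Rightarrow> int \<Rightarrow> int \<Rightarrow> pauli \<Rightarrow> pauli" where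
  "Psi C i j b = (if i mod 2 = 0 then
      (if j = i + 1 then fst (gate_img (C (i+1)) (b, PI)) else if j = i + 2 then snd (gate_img (C (i+1)) (b, PI)) else PI)
    else (if j = i + 1 then b else PI))"

definition Gam :: "(int \<Rightarrow> complex mat) \<Rightarrow> int \<Rightarrow> (int \<Rightarrow> pauli) \<Rightarrow> pauli" where
  "Gam C i x = (if i mod 2 = 0 then x i else snd (gate_img (C (i - 1)) (x (i - 1), x i)))"

lemma Psi_PI: assumes "\<forall>j. clifford2 (C j)" shows "Psi C i j PI = PI"
  unfolding Psi_def using gate_img_PI[OF assms[rule_format]] by auto

lemma layer_ev: "(j - par) mod 2 = 0 \<Longrightarrow> layer C par P j = fst (gate_img (C j) (P j, P (j + 1)))"
  by (simp add: layer_def)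
lemma layer_od: "(j - par) mod 2 \<noteq> 0 \<Longrightarrow> layer C par P j = snd (gate_img (C (j - 1)) (P (j - 1), P j))"
  by (simp add: layer_def)

lemma U_right: assumes cl: "\<forall>j. clifford2 (C j)" and x: "lw i x" and j: "j > i"
  shows "U_act C x j = Psi C i j (snd (gate_img (C i) (Gam C i x, PI)))"
proof -
  note gPI = gate_img_PI[OF cl[rule_format]]
  have xr: "\<And>j. j > i \<Longrightarrow> x j = PI" using x by (simp add: lw_def)
  define E where "E = layer C 0 x"
  have UE: "U_act C x = layer C 1 E" by (simp add: U_act_def E_def)
  show ?thesis
  proof (cases "i mod 2 = 0")
    case True
    have E1: "E (i+1) = snd (gate_img (C i) (x i, PI))"
    proof -
      have "(i + 1 - 0) mod 2 \<noteq> 0" using True by presburger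
      thus ?thesis unfolding E_def using xr[of "i+1"] by (simp add: layer_od)
    qed
    have E2: "E k = PI" if "k \<ge> i + 2" for k
    proof (cases "(k - 0) mod 2 = 0")
      case True thus ?thesis unfolding E_def using xr[of k] xr[of "k+1"] that gPI by (simp add: layer_ev)
    next
      case False thus ?thesis unfolding E_def using xr[of k] xr[of "k-1"] that gPI by (simp add: layer_od)
    qed
    consider "j = i + 1" | "j = i + 2" | "j \<ge> i + 3" using j by linarith
    thus ?thesis
    proof cases
      case 1
      have "(j - 1) mod 2 = 0" using True 1 by presburger
      thus ?thesis unfolding UE Psi_def Gam_def using 1 True E1 E2[of "i+2"] by (simp add: layer_ev add.commute)
    next
      case 2
      have "(j - 1) mod 2 \<noteq> 0" using True 2 by presburger
      thus ?thesis unfolding UE Psi_def Gam_def using 2 True E1 E2[of "i+2"] by (simp add: layer_od add.commute)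
    next
      case 3
      show ?thesis
      proof (cases "(j - 1) mod 2 = 0")
        case True2: True
        thus ?thesis unfolding UE Psi_def using 3 E2[of j] E2[of "j+1"] gPI by (simp add: layer_ev)
      next
        case False
        thus ?thesis unfolding UE Psi_def using 3 E2[of j] E2[of "j-1"] gPI by (simp add: layer_od)
      qed
    qed
  next
    case False
    have Ei: "E i = snd (gate_img (C (i - 1)) (x (i - 1), x i))"
    proof -
      have "(i - 0) mod 2 \<noteq> 0" using False by presburger
      thus ?thesis unfolding E_def by (simp add: layer_od)
    qed
    have E2: "E k = PI" if "k \<ge> i + 1" for k
    proof (cases "(k - 0) mod 2 = 0")
      case True thus ?thesis unfolding E_def using xr[of k] xr[of "k+1"] that gPI by (simp add: layer_ev)
    next
      case F2: False
      have "k \<noteq> i + 1" using F2 False by presburger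
      hence "k - 1 > i" using that by simp
      thus ?thesis unfolding E_def using F2 xr[of k] xr[of "k-1"] that gPI by (simp add: layer_od)
    qed
    show ?thesis
    proof (cases "j = i + 1")
      case True
      have "(j - 1) mod 2 \<noteq> 0" using True False by presburger
      thus ?thesis unfolding UE Psi_def Gam_def using True False Ei E2[of "i+1"] by (simp add: layer_od)
    next
      case F3: False
      hence j2: "j \<ge> i + 2" using j by simp
      show ?thesis
      proof (cases "(j - 1) mod 2 = 0")
        case True
        thus ?thesis unfolding UE Psi_def using j2 F3 False E2[of j] E2[of "j+1"] gPI by (simp add: layer_ev)
      next
        case F4: False
        thus ?thesis unfolding UE Psi_def using j2 F3 False E2[of j] E2[of "j-1"] gPI by (simp add: layer_od)
      qed
    qed
  qed
qed

lemma right_agree: assumes cl: "\<forall>j. clifford2 (C j)" and r: "R1 (C i)"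
  and x: "lw i x" and w: "lw i w" and nx: "\<not> lw i (U_act C x)" and nw: "\<not> lw i (U_act C w)"
  shows "\<forall>j>i. U_act C x j = U_act C w j"
proof -
  let ?bx = "snd (gate_img (C i) (Gam C i x, PI))"
  let ?bw = "snd (gate_img (C i) (Gam C i w, PI))"
  have "?bx \<noteq> PI"
  proof
    assume "?bx = PI"
    hence "lw i (U_act C x)" unfolding lw_def using U_right[OF cl x] Psi_PI[OF cl] by simp
    with nx show False by simp
  qed
  moreover have "?bw \<noteq> PI"
  proof
    assume "?bw = PI"
    hence "lw i (U_act C w)" unfolding lw_def using U_right[OF cl w] Psi_PI[OF cl] by simp
    with nw show False by simp
  qed
  ultimately have "?bx = ?bw" using r unfolding R1_def by blast
  thus ?thesis using U_right[OF cl x] U_right[OF cl w] by simp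
qed

lemma cut_lemma: assumes cl: "\<forall>j. clifford2 (C j)" and r: "R1 (C i)"
  and wall: "left_wall C a c" and ai: "a \<le> i" and ic: "i \<le> c"
  shows "left_wall C a i \<or> left_wall C i c"
proof (rule disjCI)
  let ?U = "U_act C"
  assume "\<not> left_wall C i c"
  show "left_wall C a i"
  proof (rule ccontr)
    assume "\<not> left_wall C a i"
    then obtain P t where Pf: "finite {j. P j \<noteq> PI}" and Pa: "\<forall>j. P j \<noteq> PI \<longrightarrow> j \<le> a"
      and t: "t \<ge> 1" and nt: "\<not> lw i ((?U ^^ t) P)"
      unfolding left_wall_def lw_def by blast
    have wallP: "lw c ((?U ^^ s) P)" if "s \<ge> 1" for s
      using wall Pf Pa that unfolding left_wall_def lw_def by blast
    define t0 where "t0 = (LEAST s. s \<ge> 1 \<and> \<not> lw i ((?U ^^ s) P))"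
    have t0: "t0 \<ge> 1" "\<not> lw i ((?U ^^ t0) P)"
      using LeastI[of "\<lambda>s. s \<ge> 1 \<and> \<not> lw i ((?U ^^ s) P)" t] t nt unfolding t0_def by auto
    have t0min: "lw i ((?U ^^ s) P)" if "s \<ge> 1" "s < t0" for s
      using not_less_Least[of s "\<lambda>s. s \<ge> 1 \<and> \<not> lw i ((?U ^^ s) P)"] that unfolding t0_def by auto
    define w where "w = (?U ^^ (t0 - 1)) P"
    have lww: "lw i w"
    proof (cases "t0 - 1 = 0")
      case True
      hence "w = P" unfolding w_def by simp
      thus ?thesis using Pa ai unfolding lw_def by (meson dual_order.trans not_le)
    next
      case False thus ?thesis unfolding w_def using t0min[of "t0 - 1"] by simp
    qed
    have Uw: "?U w = (?U ^^ t0) P"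
    proof -
      have "t0 = Suc (t0 - 1)" using t0 by simp
      hence "(?U ^^ t0) P = (?U ^^ Suc (t0 - 1)) P" by metis
      thus ?thesis unfolding w_def by simp
    qed
    have nUw: "\<not> lw i (?U w)" using Uw t0 by simp
    define Zs where "Zs z \<longleftrightarrow> (\<forall>s. lw c ((?U ^^ s) z))" for z
    have ZUw: "Zs (?U w)" unfolding Zs_def
    proof
      fix s
      have "(?U ^^ s) (?U w) = (?U ^^ (s + t0)) P" using Uw by (simp add: funpow_add)
      thus "lw c ((?U ^^ s) (?U w))" using wallP[of "s + t0"] t0 by simp
    qed
    have ZU: "Zs (?U z)" if "Zs z" for z
      using that unfolding Zs_def by (metis comp_apply funpow_Suc_right)
    have Zmult: "Zs (pmf y z)" if "Zs y" "Zs z" for y z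
      using that unfolding Zs_def by (simp add: Upow_mult[OF cl] lw_pmf)
    have ZPI: "Zs (\<lambda>_. PI)" unfolding Zs_def by (simp add: Upow_PI[OF cl] lw_def)
    define M where "M m \<longleftrightarrow> (\<exists>x z. lw i x \<and> Zs z \<and> m = pmf x z)" for m
    have MU: "M (?U m)" if mm: "M m" for m
    proof -
      obtain x z where xz: "lw i x" "Zs z" "m = pmf x z" using mm unfolding M_def by blast
      have Um: "?U m = pmf (?U x) (?U z)" using xz U_mult[OF cl] by simp
      show ?thesis
      proof (cases "lw i (?U x)")
        case True thus ?thesis unfolding M_def using Um ZU[OF xz(2)] by blast
      next
        case False
        have agree: "\<forall>j>i. ?U x j = ?U w j" by (rule right_agree[OF cl r xz(1) lww False nUw])
        have "lw i (pmf (?U x) (?U w))" using agree by (simp add: lw_def pmf_def)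
        moreover have "Zs (pmf (?U w) (?U z))" by (rule Zmult[OF ZUw ZU[OF xz(2)]])
        moreover have "?U m = pmf (pmf (?U x) (?U w)) (pmf (?U w) (?U z))"
          using Um by (simp add: pmf_def pm_assoc pm_cancel)
        ultimately show ?thesis unfolding M_def by blast
      qed
    qed
    have Mall: "M ((?U ^^ s) Q)" if "lw i Q" for s Q
    proof (induction s)
      case 0
      have "Q = pmf Q (\<lambda>_. PI)" by simp
      thus ?case unfolding M_def using that ZPI by (metis funpow_0)
    next
      case (Suc s) thus ?case using MU by simp
    qed
    have "left_wall C i c" unfolding left_wall_def
    proof (intro allI impI)
      fix Q :: "int \<Rightarrow> pauli" and s :: nat and j :: int
      assume "finite {j. Q j \<noteq> PI}" "\<forall>j. Q j \<noteq> PI \<longrightarrow> j \<le> i" "1 \<le> s" "j > c"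
      hence "lw i Q" unfolding lw_def by (meson not_le)
      from Mall[OF this, of s] obtain x z where "lw i x" "Zs z" "(?U ^^ s) Q = pmf x z" unfolding M_def by blast
      moreover have "lw c z" using \<open>Zs z\<close> unfolding Zs_def by (metis funpow_0)
      ultimately have "lw c ((?U ^^ s) Q)" using lw_mono[OF _ ic] lw_pmf by simp
      thus "(?U ^^ s) Q j = PI" using \<open>j > c\<close> by (simp add: lw_def)
    qed
    with \<open>\<not> left_wall C i c\<close> show False by simp
  qed
qed

definition m2 :: "complex \<Rightarrow> complex \<Rightarrow> complex \<Rightarrow> complex \<Rightarrow> complex mat" where
  "m2 a b c d = mat_of_rows_list 2 [[a, b], [c, d]]"

lemma m2_carrier[simp]: "m2 a b c d \<in> carrier_mat 2 2"
  unfolding m2_def mat_of_rows_list_def carrier_mat_def by simp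
lemma m2_dims[simp]: "dim_row (m2 a b c d) = 2" "dim_col (m2 a b c d) = 2"
  unfolding m2_def mat_of_rows_list_def by simp_all
lemma m2_idx: "i < 2 \<Longrightarrow> j < 2 \<Longrightarrow> m2 a b c d $$ (i,j) = (if i = 0 then (if j = 0 then a else b) else (if j = 0 then c else d))"
  unfolding m2_def mat_of_rows_list_def by (auto simp: less2)
lemma m2_index: "m2 a b c d $$ (0,0) = a" "m2 a b c d $$ (0,1) = b" "m2 a b c d $$ (1,0) = c" "m2 a b c d $$ (1,1) = d"
  by (simp_all add: m2_idx)

lemma m2_mult: "m2 a b c d * m2 e f g h = m2 (a*e + b*g) (a*f + b*h) (c*e + d*g) (c*f + d*h)"
  by (rule eq2I) (simp_all add: mult2_index m2_idx del: index_mult_mat)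

lemma m2_adj: "mat_adjoint (m2 a b c d) = m2 (cnj a) (cnj c) (cnj b) (cnj d)"
  apply (rule eq2I)
  apply (rule adj_carrier[OF m2_carrier])
  apply (rule m2_carrier)
  by (simp_all add: m2_idx)

lemma m2_smult: "k \<cdot>\<^sub>m m2 a b c d = m2 (k*a) (k*b) (k*c) (k*d)"
  apply (rule eq2I)
  apply simp
  apply (rule m2_carrier)
  by (simp_all add: m2_idx)

lemma m2_eq: "m2 a b c d = m2 a' b' c' d' \<longleftrightarrow> a = a' \<and> b = b' \<and> c = c' \<and> d = d'"
  by (metis m2_index)

lemma pmat_m2: "pmat PI = m2 1 0 0 1" "pmat PX = m2 0 1 1 0" "pmat PY = m2 0 (-\<i>) \<i> 0" "pmat PZ = m2 1 0 0 (-1)"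
  unfolding pmat_def m2_def by simp_all

lemma one_m2: "1\<^sub>m 2 = m2 1 0 0 1" using pmat_PI pmat_m2 by simp

lemma clif1_from_XZ: assumes u: "unitary_mat 2 a"
  and ex: "a * pmat PX * mat_adjoint a = c1 \<cdot>\<^sub>m pmat s" "c1 \<noteq> 0"
  and ez: "a * pmat PZ * mat_adjoint a = c2 \<cdot>\<^sub>m pmat t" "c2 \<noteq> 0"
  shows "clifford1 a \<and> img1 a PX = s \<and> img1 a PZ = t"
proof -
  note uc = unitaryD[OF u]
  have cl: "clifford1 a" unfolding clifford1_def
  proof (intro conjI allI)
    show "unitary_mat 2 a" by (rule u)
    fix p
    show "\<exists>q c. a * pmat p * mat_adjoint a = c \<cdot>\<^sub>m pmat q"
    proof (cases p)
      case PI
      have "a * pmat p * mat_adjoint a = 1 \<cdot>\<^sub>m pmat PI" using uc PI by (simp add: pmat_PI)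
      thus ?thesis by blast
    next
      case PX thus ?thesis using ex by blast
    next
      case PZ thus ?thesis using ez by blast
    next
      case PY
      have y: "pmat PY = \<i> \<cdot>\<^sub>m (pmat PX * pmat PZ)" by (simp add: pmat_mult)
      have "a * pmat PY * mat_adjoint a = \<i> \<cdot>\<^sub>m ((a * pmat PX * mat_adjoint a) * (a * pmat PZ * mat_adjoint a))"
        unfolding y using uc by (simp add: conj_smult[of _ 2] conj_mult[OF u])
      also have "\<dots> = (\<i> * c1 * c2 * ph s t) \<cdot>\<^sub>m pmat (pm s t)"
        unfolding ex ez by (simp add: mult_smult_assoc_mat[of _ 2 2 _ 2] mult_smult_distrib[of _ 2 2 _ 2] pmat_mult mult_ac)
      finally show ?thesis using PY by blast
    qed
  qed
  show ?thesis using cl clif1_img_unique[OF cl ex] clif1_img_unique[OF cl ez] by blast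
qed

definition hh :: complex where "hh = (1 + \<i>) / 2"

definition Cl1 :: "pauli \<Rightarrow> pauli \<Rightarrow> complex mat" where
  "Cl1 s t = (if s = PX \<and> t = PZ then m2 1 0 0 1
     else if s = PZ \<and> t = PX then m2 hh hh hh (-hh)
     else if s = PY \<and> t = PZ then m2 1 0 0 \<i>
     else if s = PY \<and> t = PX then m2 hh (hh*\<i>) hh (-hh*\<i>)
     else if s = PZ \<and> t = PY then m2 hh hh (hh*\<i>) (-hh*\<i>)
     else m2 (hh*\<i>) hh hh (hh*\<i>))"

lemma Cl1_ok: assumes "s \<noteq> t" "s \<noteq> PI" "t \<noteq> PI"
  shows "unitary_mat 2 (Cl1 s t) \<and>
    (\<exists>c1. c1 \<noteq> 0 \<and> Cl1 s t * pmat PX * mat_adjoint (Cl1 s t) = c1 \<cdot>\<^sub>m pmat s) \<and>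
    (\<exists>c2. c2 \<noteq> 0 \<and> Cl1 s t * pmat PZ * mat_adjoint (Cl1 s t) = c2 \<cdot>\<^sub>m pmat t)"
  using assms
  apply (cases s; cases t)
  apply (simp_all add: Cl1_def unitary_mat_def one_m2 pmat_m2 m2_adj m2_mult m2_smult m2_eq)
  apply (auto simp: hh_def complex_eq_iff intro!: exI[of _ 1] exI[of _ "-1"])
  done

lemma clif1_XZ_exists: assumes "s \<noteq> t" "s \<noteq> PI" "t \<noteq> PI"
  shows "\<exists>a. clifford1 a \<and> img1 a PX = s \<and> img1 a PZ = t"
proof -
  from Cl1_ok[OF assms] obtain c1 c2 where
    "unitary_mat 2 (Cl1 s t)" "c1 \<noteq> 0" "Cl1 s t * pmat PX * mat_adjoint (Cl1 s t) = c1 \<cdot>\<^sub>m pmat s"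
    "c2 \<noteq> 0" "Cl1 s t * pmat PZ * mat_adjoint (Cl1 s t) = c2 \<cdot>\<^sub>m pmat t" by blast
  from clif1_from_XZ[OF this(1) this(3) this(2) this(5) this(4)] show ?thesis by blast
qed

lemma clif1_one: "clifford1 (1\<^sub>m 2)"
proof -
  have u: "unitary_mat 2 (1\<^sub>m 2 :: complex mat)" unfolding unitary_mat_def by simp
  have "1\<^sub>m 2 * pmat PX * mat_adjoint (1\<^sub>m 2) = 1 \<cdot>\<^sub>m pmat PX" by simp
  moreover have "1\<^sub>m 2 * pmat PZ * mat_adjoint (1\<^sub>m 2) = 1 \<cdot>\<^sub>m pmat PZ" by simp
  ultimately show ?thesis using clif1_from_XZ[OF u, of 1 PX 1 PZ] by simp
qed

lemma img1_mult: assumes "clifford1 a" shows "img1 a (pm p q) = pm (img1 a p) (img1 a q)"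
proof -
  have c: "clifford2 (kron2 a (1\<^sub>m 2))" by (rule kron_clif(1)[OF assms clif1_one])
  have "gate_img (kron2 a (1\<^sub>m 2)) (pm2 (p,PI) (q,PI)) = pm2 (gate_img (kron2 a (1\<^sub>m 2)) (p,PI)) (gate_img (kron2 a (1\<^sub>m 2)) (q,PI))"
    by (rule gate_img_mult[OF c])
  thus ?thesis by (simp add: kron_clif(2)[OF assms clif1_one] pm2_def)
qed

lemma img1_PI: assumes "clifford1 a" shows "img1 a PI = PI"
proof -
  have "img1 a PI = img1 a (pm PI PI)" by simp
  also have "\<dots> = pm (img1 a PI) (img1 a PI)" by (rule img1_mult[OF assms])
  finally show ?thesis by simp
qed

lemma img1_PY: assumes "clifford1 a" shows "img1 a PY = pm (img1 a PX) (img1 a PZ)"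
  using img1_mult[OF assms, of PX PZ] by simp

lemma pm_eq_left: "pm s t = s \<longleftrightarrow> t = PI" by (cases s; cases t; simp)
lemma pm_eq_right: "pm s t = t \<longleftrightarrow> s = PI" by (cases s; cases t; simp)
lemma pm_can2: "pm (pm p q) q = p" "pm (pm p q) p = q" "pm q (pm p q) = p"
  by (cases p; cases q; simp)+

lemma clif1_exists: assumes "u \<noteq> v" "u \<noteq> PI" "v \<noteq> PI" "s \<noteq> t" "s \<noteq> PI" "t \<noteq> PI"
  shows "\<exists>a. clifford1 a \<and> img1 a u = s \<and> img1 a v = t"
proof -
  define sx where "sx = (if u = PX then s else if v = PX then t else pm s t)"
  define tz where "tz = (if u = PZ then s else if v = PZ then t else pm s t)"
  have st: "pm s t \<noteq> PI" "pm s t \<noteq> s" "pm s t \<noteq> t" "s \<noteq> pm s t" "t \<noteq> pm s t"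
    using assms by (auto simp: pm_eq_PI pm_eq_left pm_eq_right dest: sym)
  have ne: "sx \<noteq> tz \<and> sx \<noteq> PI \<and> tz \<noteq> PI" using assms st unfolding sx_def tz_def
    by (cases u; cases v; simp)
  obtain a where a: "clifford1 a" "img1 a PX = sx" "img1 a PZ = tz" using clif1_XZ_exists ne by blast
  have ay: "img1 a PY = pm sx tz" using img1_PY[OF a(1)] a by simp
  have "img1 a u = s \<and> img1 a v = t"
    using assms a(2,3) ay img1_PI[OF a(1)] unfolding sx_def tz_def
    by (cases u; cases v; simp add: pm_cancel pm_can2)
  with a(1) show ?thesis by blast
qed

definition sw :: "nat \<Rightarrow> nat" where "sw r = (if r = 1 then 2 else if r = 2 then 1 else r)"
definition dz :: "nat \<Rightarrow> complex" where "dz r = (if r = 3 then -1 else 1)"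

lemma SWAP_dims[simp]: "dim_row SWAP = 4" "dim_col SWAP = 4" unfolding SWAP_def mat_of_rows_list_def by simp_all
lemma CZ_dims[simp]: "dim_row CZ = 4" "dim_col CZ = 4" unfolding CZ_def mat_of_rows_list_def by simp_all
lemma SWAP_carrier[simp]: "SWAP \<in> carrier_mat 4 4" unfolding carrier_mat_def by simp
lemma CZ_carrier[simp]: "CZ \<in> carrier_mat 4 4" unfolding carrier_mat_def by simp

lemma SWAP_idx: assumes "r < 4" "s < 4" shows "SWAP $$ (r,s) = (if s = sw r then 1 else 0)"
proof -
  have "r = 0 \<or> r = 1 \<or> r = 2 \<or> r = 3" "s = 0 \<or> s = 1 \<or> s = 2 \<or> s = 3" using assms by auto
  thus ?thesis unfolding SWAP_def mat_of_rows_list_def sw_def by auto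
qed

lemma CZ_idx: assumes "r < 4" "s < 4" shows "CZ $$ (r,s) = (if r = s then dz r else 0)"
proof -
  have "r = 0 \<or> r = 1 \<or> r = 2 \<or> r = 3" "s = 0 \<or> s = 1 \<or> s = 2 \<or> s = 3" using assms by auto
  thus ?thesis unfolding CZ_def mat_of_rows_list_def dz_def by auto
qed

lemma sw_lt: "r < 4 \<Longrightarrow> sw r < 4" by (simp add: sw_def)
lemma sw_sw: "sw (sw r) = r" by (simp add: sw_def)

lemma SWAP_left: assumes "M \<in> carrier_mat 4 n" "r < 4" "s < n" shows "(SWAP * M) $$ (r,s) = M $$ (sw r, s)"
proof -
  have "(SWAP * M) $$ (r,s) = (\<Sum>t\<in>{0..<4}. SWAP $$ (r,t) * M $$ (t,s))"
    using assms by (simp add: scalar_prod_def)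
  also have "\<dots> = M $$ (sw r, s)"
    using assms(2) by (simp add: sum4 SWAP_idx) (auto simp: sw_def less4)
  finally show ?thesis .
qed

lemma SWAP_right: assumes "M \<in> carrier_mat n 4" "r < n" "s < 4" shows "(M * SWAP) $$ (r,s) = M $$ (r, sw s)"
proof -
  have "(M * SWAP) $$ (r,s) = (\<Sum>t\<in>{0..<4}. M $$ (r,t) * SWAP $$ (t,s))"
    using assms by (simp add: scalar_prod_def)
  also have "\<dots> = M $$ (r, sw s)"
    using assms(3) by (simp add: sum4 SWAP_idx) (auto simp: sw_def less4)
  finally show ?thesis .
qed

lemma CZ_left: assumes "M \<in> carrier_mat 4 n" "r < 4" "s < n" shows "(CZ * M) $$ (r,s) = dz r * M $$ (r, s)"
proof -
  have "(CZ * M) $$ (r,s) = (\<Sum>t\<in>{0..<4}. CZ $$ (r,t) * M $$ (t,s))"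
    using assms by (simp add: scalar_prod_def)
  also have "\<dots> = dz r * M $$ (r, s)"
    using assms(2) by (simp add: sum4 CZ_idx) (auto simp: less4)
  finally show ?thesis .
qed

lemma CZ_right: assumes "M \<in> carrier_mat n 4" "r < n" "s < 4" shows "(M * CZ) $$ (r,s) = M $$ (r, s) * dz s"
proof -
  have "(M * CZ) $$ (r,s) = (\<Sum>t\<in>{0..<4}. M $$ (r,t) * CZ $$ (t,s))"
    using assms by (simp add: scalar_prod_def)
  also have "\<dots> = M $$ (r, s) * dz s"
    using assms(3) by (simp add: sum4 CZ_idx) (auto simp: less4)
  finally show ?thesis .
qed

lemma SWAP_adj: "mat_adjoint SWAP = SWAP"
  by (rule eq_matI) (auto simp: SWAP_idx sw_def)

lemma CZ_adj: "mat_adjoint CZ = CZ"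
  by (rule eq_matI) (auto simp: CZ_idx dz_def)

lemma SWAP_conj: assumes "M \<in> carrier_mat 4 4" "r < 4" "s < 4"
  shows "(SWAP * M * SWAP) $$ (r,s) = M $$ (sw r, sw s)"
  using assms by (simp add: SWAP_right[of _ 4] SWAP_left[of _ 4] sw_lt del: index_mult_mat)

lemma CZ_conj_idx: assumes "M \<in> carrier_mat 4 4" "r < 4" "s < 4"
  shows "(CZ * M * CZ) $$ (r,s) = dz r * M $$ (r,s) * dz s"
  using assms by (simp add: CZ_right[of _ 4] CZ_left[of _ 4] del: index_mult_mat)

lemma SWAP_sq: "SWAP * SWAP = 1\<^sub>m 4"
proof (rule eq_matI)
  fix i j assume "i < dim_row (1\<^sub>m 4 :: complex mat)" "j < dim_col (1\<^sub>m 4 :: complex mat)"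
  thus "(SWAP * SWAP) $$ (i,j) = 1\<^sub>m 4 $$ (i,j)"
    by (auto simp: SWAP_left[of _ 4] SWAP_idx sw_lt sw_sw simp del: index_mult_mat)
qed auto

lemma CZ_sq: "CZ * CZ = 1\<^sub>m 4"
proof (rule eq_matI)
  fix i j assume "i < dim_row (1\<^sub>m 4 :: complex mat)" "j < dim_col (1\<^sub>m 4 :: complex mat)"
  thus "(CZ * CZ) $$ (i,j) = 1\<^sub>m 4 $$ (i,j)"
    by (auto simp: CZ_left[of _ 4] CZ_idx dz_def simp del: index_mult_mat)
qed auto

lemma SWAP_kron: assumes "A \<in> carrier_mat 2 2" "B \<in> carrier_mat 2 2"
  shows "SWAP * kron2 A B * SWAP = kron2 B A"
proof (rule eq_matI)
  fix r s assume "r < dim_row (kron2 B A)" "s < dim_col (kron2 B A)"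
  hence r: "r < 4" and s: "s < 4" by auto
  have e: "sw r div 2 = r mod 2" "sw r mod 2 = r div 2" "sw s div 2 = s mod 2" "sw s mod 2 = s div 2"
    using r s by (auto simp: sw_def less4)
  show "(SWAP * kron2 A B * SWAP) $$ (r, s) = kron2 B A $$ (r, s)"
    using r s by (simp add: SWAP_conj kron2_index sw_lt e mult.commute del: index_mult_mat)
qed auto

lemma SWAP_clif: "clifford2 SWAP" "gate_img SWAP x = (snd x, fst x)"
proof -
  have u: "unitary_mat 4 SWAP" unfolding unitary_mat_def by (simp add: SWAP_adj SWAP_sq)
  have c: "SWAP * Kp y * mat_adjoint SWAP = 1 \<cdot>\<^sub>m Kp (snd y, fst y)" for y
    by (simp add: SWAP_adj Kp_def SWAP_kron)
  show cl: "clifford2 SWAP" unfolding clifford2_def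
  proof (intro conjI allI)
    show "unitary_mat 4 SWAP" by (rule u)
    fix p q show "\<exists>p' q' c. SWAP * kron2 (pmat p) (pmat q) * mat_adjoint SWAP = c \<cdot>\<^sub>m kron2 (pmat p') (pmat q')"
      using c[of "(p,q)"] unfolding Kp_def by (intro exI[of _ q] exI[of _ p] exI[of _ 1]) simp
  qed
  show "gate_img SWAP x = (snd x, fst x)" by (rule clif2_img_unique[OF cl c]) simp
qed

definition xb :: "pauli \<Rightarrow> bool" where "xb p \<longleftrightarrow> p = PX \<or> p = PY"
definition czf :: "pauli \<times> pauli \<Rightarrow> pauli \<times> pauli" where
  "czf x = (pm (fst x) (if xb (snd x) then PZ else PI), pm (snd x) (if xb (fst x) then PZ else PI))"
definition czc :: "pauli \<times> pauli \<Rightarrow> complex" where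
  "czc x = (if x = (PX,PY) \<or> x = (PY,PX) then -1 else 1)"

lemma all4: "(\<forall>r<4. P r) \<longleftrightarrow> P 0 \<and> P 1 \<and> P 2 \<and> P (3::nat)"
  by (auto simp: less4)

lemma CZ_Kp: "CZ * Kp x * CZ = czc x \<cdot>\<^sub>m Kp (czf x)"
proof -
  obtain p q where x: "x = (p,q)" by (cases x)
  have "\<forall>r<4. \<forall>s<4. dz r * (pe p (r div 2) (s div 2) * pe q (r mod 2) (s mod 2)) * dz s =
      czc (p,q) * (pe (fst (czf (p,q))) (r div 2) (s div 2) * pe (snd (czf (p,q))) (r mod 2) (s mod 2))"
    unfolding all4 by (cases p; cases q; simp add: czf_def czc_def xb_def pe_def dz_def)
  hence e: "\<And>r s. r < 4 \<Longrightarrow> s < 4 \<Longrightarrow> dz r * (pe p (r div 2) (s div 2) * pe q (r mod 2) (s mod 2)) * dz s =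
      czc (p,q) * (pe (fst (czf (p,q))) (r div 2) (s div 2) * pe (snd (czf (p,q))) (r mod 2) (s mod 2))" by blast
  show ?thesis
  proof (rule eq_matI)
    fix r s assume "r < dim_row (czc x \<cdot>\<^sub>m Kp (czf x))" "s < dim_col (czc x \<cdot>\<^sub>m Kp (czf x))"
    hence r: "r < 4" and s: "s < 4" by auto
    show "(CZ * Kp x * CZ) $$ (r, s) = (czc x \<cdot>\<^sub>m Kp (czf x)) $$ (r, s)"
      using r s e[OF r s] unfolding x by (simp add: CZ_conj_idx kron_pe_index del: index_mult_mat)
  qed auto
qed

lemma CZ_clif: "clifford2 CZ" "gate_img CZ x = czf x"
proof -
  have u: "unitary_mat 4 CZ" unfolding unitary_mat_def by (simp add: CZ_adj CZ_sq)
  have c: "CZ * Kp y * mat_adjoint CZ = czc y \<cdot>\<^sub>m Kp (czf y)" for y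
    by (simp add: CZ_adj CZ_Kp)
  show cl: "clifford2 CZ" unfolding clifford2_def
  proof (intro conjI allI)
    show "unitary_mat 4 CZ" by (rule u)
    fix p q show "\<exists>p' q' c. CZ * kron2 (pmat p) (pmat q) * mat_adjoint CZ = c \<cdot>\<^sub>m kron2 (pmat p') (pmat q')"
      using c[of "(p,q)"] unfolding Kp_def by (intro exI[of _ "fst (czf (p,q))"] exI[of _ "snd (czf (p,q))"] exI[of _ "czc (p,q)"]) simp
  qed
  show "gate_img CZ x = czf x" by (rule clif2_img_unique[OF cl c]) (simp add: czc_def)
qed

lemma FS_clif: "clifford2 (CZ * SWAP)" "gate_img (CZ * SWAP) x = czf (snd x, fst x)"
  using clif2_mult[OF CZ_clif(1) SWAP_clif(1)] by (simp_all add: CZ_clif(2) SWAP_clif(2))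

lemma cneg_self: "((x::complex) = - x) \<longleftrightarrow> x = 0" "(- x = (x::complex)) \<longleftrightarrow> x = 0"
  by (simp_all add: eq_neg_iff_add_eq_0 neg_eq_iff_add_eq_0 mult_2[symmetric])


definition z1 :: "nat \<Rightarrow> complex" where "z1 r = (if r < 2 then 1 else -1)"
definition z2 :: "nat \<Rightarrow> complex" where "z2 r = (if r mod 2 = 0 then 1 else -1)"
definition x1 :: "nat \<Rightarrow> nat" where "x1 r = (r + 2) mod 4"
definition x2 :: "nat \<Rightarrow> nat" where "x2 r = (if r mod 2 = 0 then r + 1 else r - 1)"

lemma KZI: assumes "r < 4" "s < 4" shows "Kp (PZ,PI) $$ (r,s) = (if r = s then z1 r else 0)"
proof -
  have "r = 0 \<or> r = 1 \<or> r = 2 \<or> r = 3" "s = 0 \<or> s = 1 \<or> s = 2 \<or> s = 3" using assms by auto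
  thus ?thesis using assms by (elim disjE; simp add: kron_pe_index pe_def z1_def)
qed

lemma KIZ: assumes "r < 4" "s < 4" shows "Kp (PI,PZ) $$ (r,s) = (if r = s then z2 r else 0)"
proof -
  have "r = 0 \<or> r = 1 \<or> r = 2 \<or> r = 3" "s = 0 \<or> s = 1 \<or> s = 2 \<or> s = 3" using assms by auto
  thus ?thesis using assms by (elim disjE; simp add: kron_pe_index pe_def z2_def)
qed

lemma KXI: assumes "r < 4" "s < 4" shows "Kp (PX,PI) $$ (r,s) = (if r = x1 s then 1 else 0)"
proof -
  have "r = 0 \<or> r = 1 \<or> r = 2 \<or> r = 3" "s = 0 \<or> s = 1 \<or> s = 2 \<or> s = 3" using assms by auto
  thus ?thesis using assms by (elim disjE; simp add: kron_pe_index pe_def x1_def)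
qed

lemma KIX: assumes "r < 4" "s < 4" shows "Kp (PI,PX) $$ (r,s) = (if r = x2 s then 1 else 0)"
proof -
  have "r = 0 \<or> r = 1 \<or> r = 2 \<or> r = 3" "s = 0 \<or> s = 1 \<or> s = 2 \<or> s = 3" using assms by auto
  thus ?thesis using assms by (elim disjE; simp add: kron_pe_index pe_def x2_def)
qed

lemma x1_lt: "r < 4 \<Longrightarrow> x1 r < 4" by (simp add: x1_def)
lemma x2_lt: "r < 4 \<Longrightarrow> x2 r < 4" by (auto simp: x2_def less4)
lemma x1_inv: "r < 4 \<Longrightarrow> x1 (x1 r) = r" by (auto simp: x1_def less4)
lemma x2_inv: "r < 4 \<Longrightarrow> x2 (x2 r) = r" by (auto simp: x2_def less4)

lemma diag_right: fixes M :: "complex mat" assumes "M \<in> carrier_mat 4 4" "D \<in> carrier_mat 4 4"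
  "\<And>r s. r < 4 \<Longrightarrow> s < 4 \<Longrightarrow> D $$ (r,s) = (if r = s then d r else 0)" "r < 4" "s < 4"
  shows "(M * D) $$ (r,s) = M $$ (r,s) * d s"
proof -
  have "(M * D) $$ (r,s) = (\<Sum>t\<in>{0..<4}. M $$ (r,t) * D $$ (t,s))" using assms by (simp add: scalar_prod_def)
  also have "\<dots> = (\<Sum>t\<in>{0..<4}. if t = s then M $$ (r,t) * d s else 0)"
    by (rule sum.cong) (auto simp: assms(3,5))
  finally show ?thesis using assms by simp
qed

lemma diag_left: fixes M :: "complex mat" assumes "M \<in> carrier_mat 4 4" "D \<in> carrier_mat 4 4"
  "\<And>r s. r < 4 \<Longrightarrow> s < 4 \<Longrightarrow> D $$ (r,s) = (if r = s then d r else 0)" "r < 4" "s < 4"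
  shows "(D * M) $$ (r,s) = d r * M $$ (r,s)"
proof -
  have "(D * M) $$ (r,s) = (\<Sum>t\<in>{0..<4}. D $$ (r,t) * M $$ (t,s))" using assms by (simp add: scalar_prod_def)
  also have "\<dots> = (\<Sum>t\<in>{0..<4}. if t = r then d r * M $$ (t,s) else 0)"
    by (rule sum.cong) (auto simp: assms(3,4))
  finally show ?thesis using assms by simp
qed

lemma perm_right: fixes M :: "complex mat" assumes "M \<in> carrier_mat 4 4" "P \<in> carrier_mat 4 4"
  "\<And>r s. r < 4 \<Longrightarrow> s < 4 \<Longrightarrow> P $$ (r,s) = (if r = f s then 1 else 0)" "r < 4" "s < 4" "f s < 4"
  shows "(M * P) $$ (r,s) = M $$ (r, f s)"
proof -
  have "(M * P) $$ (r,s) = (\<Sum>t\<in>{0..<4}. M $$ (r,t) * P $$ (t,s))" using assms by (simp add: scalar_prod_def)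
  also have "\<dots> = (\<Sum>t\<in>{0..<4}. if t = f s then M $$ (r,t) else 0)"
    by (rule sum.cong) (auto simp: assms(3,5))
  finally show ?thesis using assms by simp
qed

lemma perm_left: fixes M :: "complex mat" assumes "M \<in> carrier_mat 4 4" "P \<in> carrier_mat 4 4"
  "\<And>r s. r < 4 \<Longrightarrow> s < 4 \<Longrightarrow> P $$ (r,s) = (if r = f s then 1 else 0)" "r < 4" "s < 4"
  "\<And>t. t < 4 \<Longrightarrow> f t < 4" "\<And>t. t < 4 \<Longrightarrow> f (f t) = t"
  shows "(P * M) $$ (r,s) = M $$ (f r, s)"
proof -
  have "(P * M) $$ (r,s) = (\<Sum>t\<in>{0..<4}. P $$ (r,t) * M $$ (t,s))" using assms by (simp add: scalar_prod_def)
  also have "\<dots> = (\<Sum>t\<in>{0..<4}. if t = f r then M $$ (t,s) else 0)"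
  proof (rule sum.cong)
    fix t assume "t \<in> {0..<4::nat}"
    hence t: "t < 4" by simp
    have "(r = f t) = (t = f r)" using assms(6,7) t assms(4) by metis
    thus "P $$ (r,t) * M $$ (t,s) = (if t = f r then M $$ (t,s) else 0)" using assms(3)[OF assms(4) t] by simp
  qed simp
  finally show ?thesis using assms by simp
qed

lemma comm_scalar: fixes M :: "complex mat" assumes M: "M \<in> carrier_mat 4 4"
  and c1: "M * Kp (PX,PI) = Kp (PX,PI) * M" and c2: "M * Kp (PZ,PI) = Kp (PZ,PI) * M"
  and c3: "M * Kp (PI,PX) = Kp (PI,PX) * M" and c4: "M * Kp (PI,PZ) = Kp (PI,PZ) * M"
  shows "M = M $$ (0,0) \<cdot>\<^sub>m 1\<^sub>m 4"
proof -
  have Z1: "M $$ (r,s) * z1 s = z1 r * M $$ (r,s)" if "r < 4" "s < 4" for r s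
  proof -
    have "(M * Kp (PZ,PI)) $$ (r,s) = (Kp (PZ,PI) * M) $$ (r,s)" using c2 by simp
    thus ?thesis using diag_right[OF M Kp_carrier KZI that] diag_left[OF M Kp_carrier KZI that] by simp
  qed
  have Z2: "M $$ (r,s) * z2 s = z2 r * M $$ (r,s)" if "r < 4" "s < 4" for r s
  proof -
    have "(M * Kp (PI,PZ)) $$ (r,s) = (Kp (PI,PZ) * M) $$ (r,s)" using c4 by simp
    thus ?thesis using diag_right[OF M Kp_carrier KIZ that] diag_left[OF M Kp_carrier KIZ that] by simp
  qed
  have X1: "M $$ (r, x1 s) = M $$ (x1 r, s)" if "r < 4" "s < 4" for r s
  proof -
    have "(M * Kp (PX,PI)) $$ (r,s) = (Kp (PX,PI) * M) $$ (r,s)" using c1 by simp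
    thus ?thesis using perm_right[OF M Kp_carrier KXI that x1_lt[OF that(2)]]
        perm_left[OF M Kp_carrier KXI that x1_lt x1_inv] by simp
  qed
  have X2: "M $$ (r, x2 s) = M $$ (x2 r, s)" if "r < 4" "s < 4" for r s
  proof -
    have "(M * Kp (PI,PX)) $$ (r,s) = (Kp (PI,PX) * M) $$ (r,s)" using c3 by simp
    thus ?thesis using perm_right[OF M Kp_carrier KIX that x2_lt[OF that(2)]]
        perm_left[OF M Kp_carrier KIX that x2_lt x2_inv] by simp
  qed
  have d1: "M $$ (1,1) = M $$ (0,0)" using X2[of 0 1] by (simp add: x2_def)
  have x12: "x1 0 = 2" "x1 2 = 0" by (simp_all add: x1_def)
  have d2: "M $$ (2,2) = M $$ (0,0)" using X1[of 0 2] unfolding x12 by simp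
  have d3: "M $$ (3,3) = M $$ (0,0)" using X1[of 1 3] d1 by (simp add: x1_def)
  show ?thesis
  proof (rule eq_matI)
    fix r s assume "r < dim_row (M $$ (0,0) \<cdot>\<^sub>m 1\<^sub>m 4)" "s < dim_col (M $$ (0,0) \<cdot>\<^sub>m 1\<^sub>m 4)"
    hence r: "r < 4" and s: "s < 4" by auto
    have rr: "r = 0 \<or> r = 1 \<or> r = 2 \<or> r = 3" "s = 0 \<or> s = 1 \<or> s = 2 \<or> s = 3" using r s by auto
    have z: "M $$ (r,s) * z1 s = z1 r * M $$ (r,s)" "M $$ (r,s) * z2 s = z2 r * M $$ (r,s)" using Z1[OF r s] Z2[OF r s] .
    show "M $$ (r,s) = (M $$ (0,0) \<cdot>\<^sub>m 1\<^sub>m 4) $$ (r,s)"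
      using rr z d1 d2 d3 r s by (elim disjE; simp add: z1_def z2_def cneg_self)
  qed (use M in auto)
qed

lemma sg_sym: "sg x y = sg y x"
  unfolding sg_def comm2_def comm1_def by auto

lemma W_pauli: fixes W :: "complex mat"
  assumes W: "W \<in> carrier_mat 4 4" "W * mat_adjoint W = 1\<^sub>m 4"
  and e: "\<And>\<sigma>. \<sigma> \<in> {(PX,PI),(PZ,PI),(PI,PX),(PI,PZ)} \<Longrightarrow> \<exists>e. W * Kp \<sigma> = e \<cdot>\<^sub>m (Kp \<sigma> * W)"
  shows "\<exists>lam p q. W = lam \<cdot>\<^sub>m Kp (p,q) \<and> lam * cnj lam = 1"
proof -
  have sgn: "\<exists>e. (e = 1 \<or> e = -1) \<and> W * Kp \<sigma> = e \<cdot>\<^sub>m (Kp \<sigma> * W)" if sig: "\<sigma> \<in> {(PX,PI),(PZ,PI),(PI,PX),(PI,PZ)}" for \<sigma>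
  proof -
    obtain e where e: "W * Kp \<sigma> = e \<cdot>\<^sub>m (Kp \<sigma> * W)" using assms(3)[OF sig] by blast
    have K: "Kp \<sigma> \<in> carrier_mat 4 4" "Kp \<sigma> * Kp \<sigma> = 1\<^sub>m 4" by simp_all
    have "W = W * (Kp \<sigma> * Kp \<sigma>)" using W(1) K(2) by simp
    also have "\<dots> = (W * Kp \<sigma>) * Kp \<sigma>" by (rule assoc_mult_mat[OF W(1) K(1) K(1), symmetric])
    also have "\<dots> = (e \<cdot>\<^sub>m (Kp \<sigma> * W)) * Kp \<sigma>" by (simp only: e)
    also have "\<dots> = e \<cdot>\<^sub>m ((Kp \<sigma> * W) * Kp \<sigma>)" by (rule mult_smult_assoc_mat[OF mult_carrier4[OF K(1) W(1)] K(1)])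
    also have "(Kp \<sigma> * W) * Kp \<sigma> = Kp \<sigma> * (W * Kp \<sigma>)" by (rule assoc_mult_mat[OF K(1) W(1) K(1)])
    also have "\<dots> = Kp \<sigma> * (e \<cdot>\<^sub>m (Kp \<sigma> * W))" by (simp only: e)
    also have "\<dots> = e \<cdot>\<^sub>m (Kp \<sigma> * (Kp \<sigma> * W))" by (rule mult_smult_distrib[OF K(1) mult_carrier4[OF K(1) W(1)]])
    also have "Kp \<sigma> * (Kp \<sigma> * W) = W" using assoc_mult_mat[OF K(1) K(1) W(1)] K(2) W(1) by simp
    finally have "W = (e * e) \<cdot>\<^sub>m W" by simp
    hence "W * mat_adjoint W = ((e * e) \<cdot>\<^sub>m W) * mat_adjoint W" by (rule arg_cong[where f = "\<lambda>X. X * mat_adjoint W"])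
    hence "1\<^sub>m 4 = (e * e) \<cdot>\<^sub>m (1\<^sub>m 4 :: complex mat)" using W by (simp add: mult_smult_assoc_mat[of _ 4 4 _ 4])
    hence "(1\<^sub>m 4 :: complex mat) $$ (0,0) = ((e * e) \<cdot>\<^sub>m (1\<^sub>m 4 :: complex mat)) $$ (0,0)" by simp
    hence "e * e = 1" by simp
    hence "e = 1 \<or> e = -1" by (metis square_eq_1_iff)
    with e show ?thesis by blast
  qed
  obtain eX1 where eX1: "eX1 = 1 \<or> eX1 = -1" "W * Kp (PX,PI) = eX1 \<cdot>\<^sub>m (Kp (PX,PI) * W)" using sgn by blast
  obtain eZ1 where eZ1: "eZ1 = 1 \<or> eZ1 = -1" "W * Kp (PZ,PI) = eZ1 \<cdot>\<^sub>m (Kp (PZ,PI) * W)" using sgn by blast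
  obtain eX2 where eX2: "eX2 = 1 \<or> eX2 = -1" "W * Kp (PI,PX) = eX2 \<cdot>\<^sub>m (Kp (PI,PX) * W)" using sgn by blast
  obtain eZ2 where eZ2: "eZ2 = 1 \<or> eZ2 = -1" "W * Kp (PI,PZ) = eZ2 \<cdot>\<^sub>m (Kp (PI,PZ) * W)" using sgn by blast
  define p where "p = (if eX1 = 1 then (if eZ1 = 1 then PI else PX) else (if eZ1 = 1 then PZ else PY))"
  define q where "q = (if eX2 = 1 then (if eZ2 = 1 then PI else PX) else (if eZ2 = 1 then PZ else PY))"
  define T where "T = Kp (p,q)"
  have T: "T \<in> carrier_mat 4 4" "T * T = 1\<^sub>m 4" unfolding T_def by simp_all
  have s1: "sg (PX,PI) (p,q) = eX1" using eX1(1) eZ1(1) unfolding p_def sg_def comm2_def comm1_def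
    by (elim disjE) simp_all
  have s2: "sg (PZ,PI) (p,q) = eZ1" using eX1(1) eZ1(1) unfolding p_def sg_def comm2_def comm1_def
    by (elim disjE) simp_all
  have s3: "sg (PI,PX) (p,q) = eX2" using eX2(1) eZ2(1) unfolding q_def sg_def comm2_def comm1_def
    by (elim disjE) simp_all
  have s4: "sg (PI,PZ) (p,q) = eZ2" using eX2(1) eZ2(1) unfolding q_def sg_def comm2_def comm1_def
    by (elim disjE) simp_all
  have comm: "(T * W) * Kp \<sigma> = Kp \<sigma> * (T * W)" if "W * Kp \<sigma> = e \<cdot>\<^sub>m (Kp \<sigma> * W)" "sg \<sigma> (p,q) = e" for \<sigma> e
  proof -
    have "(T * W) * Kp \<sigma> = T * (W * Kp \<sigma>)" using T W by (simp add: assoc_mult_mat[of _ 4 4 _ 4 _ 4])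
    also have "\<dots> = e \<cdot>\<^sub>m (T * Kp \<sigma> * W)" unfolding that(1) using T W
      by (simp add: mult_smult_distrib[of _ 4 4 _ 4] assoc_mult_mat[of _ 4 4 _ 4 _ 4])
    also have "T * Kp \<sigma> = sg (p,q) \<sigma> \<cdot>\<^sub>m (Kp \<sigma> * T)" unfolding T_def by (rule Kp_comm)
    also have "sg (p,q) \<sigma> = e" using that(2) sg_sym by metis
    finally have "(T * W) * Kp \<sigma> = e \<cdot>\<^sub>m (e \<cdot>\<^sub>m (Kp \<sigma> * T) * W)" .
    also have "\<dots> = (e * e) \<cdot>\<^sub>m (Kp \<sigma> * (T * W))" using T W
      by (simp add: mult_smult_assoc_mat[of _ 4 4 _ 4] assoc_mult_mat[of _ 4 4 _ 4 _ 4])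
    also have "e * e = 1" using that(2) unfolding sg_def by auto
    finally show ?thesis by simp
  qed
  have TWc: "T * W \<in> carrier_mat 4 4" using T W by simp
  have sc: "T * W = (T * W) $$ (0,0) \<cdot>\<^sub>m 1\<^sub>m 4"
    apply (rule comm_scalar[OF TWc])
    using comm[OF eX1(2) s1] comm[OF eZ1(2) s2] comm[OF eX2(2) s3] comm[OF eZ2(2) s4] by simp_all
  define lam where "lam = (T * W) $$ (0,0)"
  have "W = T * (T * W)" using T W by (simp add: assoc_mult_mat[of _ 4 4 _ 4 _ 4, symmetric])
  also have "\<dots> = T * (lam \<cdot>\<^sub>m 1\<^sub>m 4)" using sc unfolding lam_def by simp
  also have "\<dots> = lam \<cdot>\<^sub>m T" using T by (simp add: mult_smult_distrib[of _ 4 4 _ 4])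
  finally have Wl: "W = lam \<cdot>\<^sub>m T" .
  have "1\<^sub>m 4 = (lam \<cdot>\<^sub>m T) * mat_adjoint (lam \<cdot>\<^sub>m T)" using W(2) Wl by simp
  also have "\<dots> = (lam * cnj lam) \<cdot>\<^sub>m (T * T)" unfolding adj_smult using T
    by (simp add: T_def mult_smult_assoc_mat[of _ 4 4 _ 4] mult_smult_distrib[of _ 4 4 _ 4] mult.commute)
  finally have "(1\<^sub>m 4 :: complex mat) $$ (0,0) = ((lam * cnj lam) \<cdot>\<^sub>m 1\<^sub>m 4) $$ (0,0)" using T by simp
  hence "lam * cnj lam = 1" by simp
  thus ?thesis using Wl unfolding T_def by blast
qed

lemma UNIV_pauli: "(UNIV :: pauli set) = {PI,PX,PY,PZ}"
  using pauli.exhaust by auto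
lemma finite_pp: "finite (UNIV :: (pauli \<times> pauli) set)"
proof -
  have f: "finite (UNIV :: pauli set)" by (simp add: UNIV_pauli)
  show ?thesis using finite_cartesian_product[OF f f] UNIV_Times_UNIV by metis
qed

lemma clif1_carrier: "clifford1 a \<Longrightarrow> a \<in> carrier_mat 2 2" by (simp add: clifford1_def unitary_mat_def)

lemma clif1_mult: assumes "clifford1 a" "clifford1 b" shows "clifford1 (a * b)"
proof -
  note ua = clif1_unitary[OF assms(1)] note uca = unitaryD[OF ua]
  note ub = clif1_unitary[OF assms(2)] note ucb = unitaryD[OF ub]
  have uab: "unitary_mat 2 (a * b)"
  proof -
    have "(a * b) * mat_adjoint (a * b) = a * (b * (mat_adjoint b * mat_adjoint a))"
      using uca ucb by (simp add: adj_mult[of _ 2 2 _ 2] assoc_mult_mat[of _ 2 2 _ 2 _ 2])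
    also have "\<dots> = 1\<^sub>m 2" using uca ucb by (simp add: uni_cancel2[OF ub, of _ 2])
    finally show ?thesis unfolding unitary_mat_def using uca ucb by auto
  qed
  show ?thesis unfolding clifford1_def
  proof (intro conjI allI)
    show "unitary_mat 2 (a * b)" by (rule uab)
    fix p
    obtain cb where cb: "b * pmat p * mat_adjoint b = cb \<cdot>\<^sub>m pmat (img1 b p)" using clif1_img[OF assms(2)] by blast
    obtain ca where ca: "a * pmat (img1 b p) * mat_adjoint a = ca \<cdot>\<^sub>m pmat (img1 a (img1 b p))" using clif1_img[OF assms(1)] by blast
    have "(a * b) * pmat p * mat_adjoint (a * b) = a * (b * pmat p * mat_adjoint b) * mat_adjoint a"
      using uca ucb by (simp add: adj_mult[of _ 2 2 _ 2] assoc_mult_mat[of _ 2 2 _ 2 _ 2])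
    also have "\<dots> = cb \<cdot>\<^sub>m (a * pmat (img1 b p) * mat_adjoint a)" using cb uca by (simp add: conj_smult[of _ 2])
    also have "\<dots> = (cb * ca) \<cdot>\<^sub>m pmat (img1 a (img1 b p))" using ca by simp
    finally show "\<exists>q c. a * b * pmat p * mat_adjoint (a * b) = c \<cdot>\<^sub>m pmat q" by blast
  qed
qed

lemma clif1_pmat: "clifford1 (pmat r)"
  unfolding clifford1_def unitary_mat_def
proof (intro conjI allI)
  show "pmat r \<in> carrier_mat 2 2" by simp
  show "pmat r * mat_adjoint (pmat r) = 1\<^sub>m 2" by simp
  fix p
  have "pmat r * pmat p * mat_adjoint (pmat r) = (ph r p * ph (pm r p) r) \<cdot>\<^sub>m pmat (pm (pm r p) r)"
    by (simp add: pmat_mult mult_smult_assoc_mat[of _ 2 2 _ 2])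
  thus "\<exists>q c. pmat r * pmat p * mat_adjoint (pmat r) = c \<cdot>\<^sub>m pmat q" by blast
qed

lemma clif1_smult: assumes "lam * cnj lam = 1" "clifford1 a" shows "clifford1 (lam \<cdot>\<^sub>m a)"
proof -
  note uc = unitaryD[OF clif1_unitary[OF assms(2)]]
  show ?thesis unfolding clifford1_def unitary_mat_def
  proof (intro conjI allI)
    show "lam \<cdot>\<^sub>m a \<in> carrier_mat 2 2" using uc by simp
    show "lam \<cdot>\<^sub>m a * mat_adjoint (lam \<cdot>\<^sub>m a) = 1\<^sub>m 2"
      using uc assms(1) by (simp add: adj_smult mult_smult_assoc_mat[of _ 2 2 _ 2] mult_smult_distrib[of _ 2 2 _ 2] mult.commute)
    fix p
    obtain c where c: "a * pmat p * mat_adjoint a = c \<cdot>\<^sub>m pmat (img1 a p)" using clif1_img[OF assms(2)] by blast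
    have "lam \<cdot>\<^sub>m a * pmat p * mat_adjoint (lam \<cdot>\<^sub>m a) = (lam * cnj lam) \<cdot>\<^sub>m (a * pmat p * mat_adjoint a)"
      using uc by (simp add: adj_smult mult_smult_assoc_mat[of _ 2 2 _ 2] mult_smult_distrib[of _ 2 2 _ 2] mult.commute)
    also have "\<dots> = c \<cdot>\<^sub>m pmat (img1 a p)" using assms(1) c by simp
    finally show "\<exists>q c. lam \<cdot>\<^sub>m a * pmat p * mat_adjoint (lam \<cdot>\<^sub>m a) = c \<cdot>\<^sub>m pmat q" by blast
  qed
qed

lemma same_action: assumes uG: "unitary_mat 4 G" and uH: "unitary_mat 4 H"
  and eG: "G * Kp s * mat_adjoint G = cG \<cdot>\<^sub>m Kp t" and eH: "H * Kp s * mat_adjoint H = cH \<cdot>\<^sub>m Kp t" and cH: "cH \<noteq> 0"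
  shows "(mat_adjoint H * G) * Kp s = (cG / cH) \<cdot>\<^sub>m (Kp s * (mat_adjoint H * G))"
proof -
  note g = unitaryD[OF uG] note h = unitaryD[OF uH]
  have hc: "mat_adjoint H \<in> carrier_mat 4 4" using h by simp
  have gc: "mat_adjoint G \<in> carrier_mat 4 4" using g by simp
  have "(mat_adjoint H * G) * Kp s = mat_adjoint H * (G * Kp s * mat_adjoint G) * G"
    using g h by (simp add: assoc_mult_mat[of _ 4 4 _ 4 _ 4] uni_cancel1[OF uG, of _ 4])
  also have "\<dots> = cG \<cdot>\<^sub>m (mat_adjoint H * Kp t * G)" unfolding eG using g h
    by (simp add: mult_smult_assoc_mat[of _ 4 4 _ 4] mult_smult_distrib[of _ 4 4 _ 4])
  also have "mat_adjoint H * Kp t = (1 / cH) \<cdot>\<^sub>m (mat_adjoint H * (cH \<cdot>\<^sub>m Kp t))"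
    using h cH by (simp add: mult_smult_distrib[of _ 4 4 _ 4])
  also have "mat_adjoint H * (cH \<cdot>\<^sub>m Kp t) = Kp s * mat_adjoint H"
    unfolding eH[symmetric] using h by (simp add: assoc_mult_mat[of _ 4 4 _ 4 _ 4] uni_cancel1[OF uH, of _ 4])
  finally show ?thesis using g h cH
    by (simp add: mult_smult_assoc_mat[of _ 4 4 _ 4] assoc_mult_mat[of _ 4 4 _ 4 _ 4])
qed

lemma comm_both: "comm1 p u \<Longrightarrow> comm1 p v \<Longrightarrow> u \<noteq> v \<Longrightarrow> u \<noteq> PI \<Longrightarrow> v \<noteq> PI \<Longrightarrow> p = PI"
  unfolding comm1_def by auto

lemma finish: assumes G: "clifford2 G" and M: "clifford2 M" and a1: "clifford1 a1" and a2: "clifford1 a2"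
  and uv: "u \<noteq> v" "u \<noteq> PI" "v \<noteq> PI"
  and hu: "gate_img (kron2 a1 a2 * M) (u,PI) = gate_img G (PX,PI)"
  and hv: "gate_img (kron2 a1 a2 * M) (v,PI) = gate_img G (PZ,PI)"
  shows "\<exists>a3 a4. clifford1 a3 \<and> clifford1 a4 \<and> G = kron2 a1 a2 * M * kron2 a3 a4"
proof -
  define T where "T = kron2 a1 a2 * M"
  have Tc: "clifford2 T" unfolding T_def by (rule clif2_mult(1)[OF kron_clif(1)[OF a1 a2] M])
  have inj: "inj (gate_img T)" using gate_img_inj[OF Tc] by (auto simp: inj_def)
  have surj: "surj (gate_img T)" by (rule finite_UNIV_inj_surj[OF finite_pp inj])
  obtain y1 where y1: "gate_img T y1 = gate_img G (PI,PX)" using surj by (metis surjD)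
  obtain y2 where y2: "gate_img T y2 = gate_img G (PI,PZ)" using surj by (metis surjD)
  have cy: "comm1 (fst y) u \<and> comm1 (fst y) v" if "gate_img T y = gate_img G z" "z = (PI,PX) \<or> z = (PI,PZ)" for y z
  proof -
    have "comm2 y (u,PI) = comm2 (gate_img T y) (gate_img T (u,PI))" by (rule gate_img_comm[OF Tc, symmetric])
    also have "\<dots> = comm2 (gate_img G z) (gate_img G (PX,PI))" using that(1) hu unfolding T_def by simp
    also have "\<dots> = comm2 z (PX,PI)" by (rule gate_img_comm[OF G])
    finally have 1: "comm2 y (u,PI) = comm2 z (PX,PI)" .
    have "comm2 y (v,PI) = comm2 (gate_img T y) (gate_img T (v,PI))" by (rule gate_img_comm[OF Tc, symmetric])
    also have "\<dots> = comm2 (gate_img G z) (gate_img G (PZ,PI))" using that(1) hv unfolding T_def by simp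
    also have "\<dots> = comm2 z (PZ,PI)" by (rule gate_img_comm[OF G])
    finally have 2: "comm2 y (v,PI) = comm2 z (PZ,PI)" .
    show ?thesis using 1 2 that(2) unfolding comm2_def comm1_def by auto
  qed
  have f1: "fst y1 = PI" using cy[OF y1] comm_both uv by blast
  have f2: "fst y2 = PI" using cy[OF y2] comm_both uv by blast
  define w1 where "w1 = snd y1"
  define w2 where "w2 = snd y2"
  have y1e: "y1 = (PI, w1)" using f1 unfolding w1_def by (cases y1) simp
  have y2e: "y2 = (PI, w2)" using f2 unfolding w2_def by (cases y2) simp
  have w1n: "w1 \<noteq> PI"
  proof
    assume "w1 = PI"
    hence "gate_img G (PI,PX) = gate_img G (PI,PI)" using y1 y1e gate_img_PI[OF Tc] gate_img_PI[OF G] by simp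
    from gate_img_inj[OF G this] show False by simp
  qed
  have w2n: "w2 \<noteq> PI"
  proof
    assume "w2 = PI"
    hence "gate_img G (PI,PZ) = gate_img G (PI,PI)" using y2 y2e gate_img_PI[OF Tc] gate_img_PI[OF G] by simp
    from gate_img_inj[OF G this] show False by simp
  qed
  have w12: "w1 \<noteq> w2"
  proof
    assume "w1 = w2"
    hence "gate_img G (PI,PX) = gate_img G (PI,PZ)" using y1 y2 y1e y2e by simp
    from gate_img_inj[OF G this] show False by simp
  qed
  obtain a3 where a3: "clifford1 a3" "img1 a3 PX = u" "img1 a3 PZ = v" using clif1_XZ_exists[OF uv] by blast
  obtain a4 where a4: "clifford1 a4" "img1 a4 PX = w1" "img1 a4 PZ = w2" using clif1_XZ_exists[OF w12 w1n w2n] by blast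
  define H where "H = T * kron2 a3 a4"
  have Hc: "clifford2 H" unfolding H_def by (rule clif2_mult(1)[OF Tc kron_clif(1)[OF a3(1) a4(1)]])
  have gH: "gate_img H x = gate_img T (img1 a3 (fst x), img1 a4 (snd x))" for x
    unfolding H_def by (simp add: clif2_mult(2)[OF Tc kron_clif(1)[OF a3(1) a4(1)]] kron_clif(2)[OF a3(1) a4(1)])
  have act: "gate_img H \<sigma> = gate_img G \<sigma>" if "\<sigma> \<in> {(PX,PI),(PZ,PI),(PI,PX),(PI,PZ)}" for \<sigma>
    using that gH a3 a4 img1_PI[OF a3(1)] img1_PI[OF a4(1)] hu hv y1 y2 y1e y2e unfolding T_def by auto
  note uG = clif2_unitary[OF G] note uH = clif2_unitary[OF Hc]
  note g = unitaryD[OF uG] note h = unitaryD[OF uH]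
  define W where "W = mat_adjoint H * G"
  have Wc: "W \<in> carrier_mat 4 4" unfolding W_def using g h by simp
  have Wu: "W * mat_adjoint W = 1\<^sub>m 4"
  proof -
    have "W * mat_adjoint W = mat_adjoint H * (G * (mat_adjoint G * H))" unfolding W_def using g h
      by (simp add: adj_mult[of _ 4 4 _ 4] assoc_mult_mat[of _ 4 4 _ 4 _ 4])
    also have "\<dots> = 1\<^sub>m 4" using g h by (simp add: uni_cancel2[OF uG, of _ 4])
    finally show ?thesis .
  qed
  have We: "\<exists>e. W * Kp \<sigma> = e \<cdot>\<^sub>m (Kp \<sigma> * W)" if sig: "\<sigma> \<in> {(PX,PI),(PZ,PI),(PI,PX),(PI,PZ)}" for \<sigma>
  proof -
    obtain cG where cG: "G * Kp \<sigma> * mat_adjoint G = cG \<cdot>\<^sub>m Kp (gate_img G \<sigma>)" using clif2_img[OF G] by blast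
    obtain cH where cH: "cH \<noteq> 0" "H * Kp \<sigma> * mat_adjoint H = cH \<cdot>\<^sub>m Kp (gate_img G \<sigma>)"
      using clif2_img[OF Hc, of \<sigma>] act[OF sig] by auto
    show ?thesis unfolding W_def using same_action[OF uG uH cG cH(2) cH(1)] by blast
  qed
  obtain lam p q where lam: "W = lam \<cdot>\<^sub>m Kp (p,q)" "lam * cnj lam = 1" using W_pauli[OF Wc Wu We] by blast
  have "G = H * W" unfolding W_def using g by (simp add: uni_cancel2[OF uH, of G 4])
  also have "\<dots> = T * (kron2 a3 a4 * (lam \<cdot>\<^sub>m kron2 (pmat p) (pmat q)))"
    unfolding H_def lam(1) Kp_def using clif1_carrier[OF a3(1)] clif1_carrier[OF a4(1)] clif2_carrier[OF Tc]
    by (simp add: assoc_mult_mat[of _ 4 4 _ 4 _ 4])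
  also have "kron2 a3 a4 * (lam \<cdot>\<^sub>m kron2 (pmat p) (pmat q)) = kron2 (lam \<cdot>\<^sub>m (a3 * pmat p)) (a4 * pmat q)"
    using clif1_carrier[OF a3(1)] clif1_carrier[OF a4(1)]
    by (simp add: mult_smult_distrib[of _ 4 4 _ 4] kron2_mult kron2_smult1)
  finally have "G = kron2 a1 a2 * M * kron2 (lam \<cdot>\<^sub>m (a3 * pmat p)) (a4 * pmat q)" unfolding T_def .
  moreover have "clifford1 (lam \<cdot>\<^sub>m (a3 * pmat p))" by (rule clif1_smult[OF lam(2) clif1_mult[OF a3(1) clif1_pmat]])
  moreover have "clifford1 (a4 * pmat q)" by (rule clif1_mult[OF a4(1) clif1_pmat])
  ultimately show ?thesis by blast
qed

lemma Qlem: assumes "f = (\<lambda>a. case a of PI \<Rightarrow> PI | PX \<Rightarrow> Q1 | PZ \<Rightarrow> Q2 | PY \<Rightarrow> pm Q1 Q2)"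
  "f a1 \<noteq> PI" "f a2 \<noteq> PI" "f a1 \<noteq> f a2"
  shows "Q1 \<noteq> PI \<and> Q2 \<noteq> PI \<and> Q1 \<noteq> Q2"
proof -
  have l: "(s = pm s t) = (t = PI)" "(t = pm s t) = (s = PI)" for s t
    using pm_eq_left[of s t] pm_eq_right[of s t] by auto
  show ?thesis using assms(2-4) unfolding assms(1)
    by (cases a1; cases a2) (auto simp: pm_eq_PI pm_eq_left pm_eq_right l)
qed

lemma classify: assumes G: "clifford2 G" and nR: "\<not> R1 G" shows "SWAP_class G \<or> FSWAP_class G"
proof -
  define \<beta> where "\<beta> a = snd (gate_img G (a, PI))" for a
  have \<beta>m: "\<beta> (pm a b) = pm (\<beta> a) (\<beta> b)" for a b
    using gate_img_mult'[OF G, of a b PI PI] unfolding \<beta>_def by simp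
  have \<beta>I: "\<beta> PI = PI" unfolding \<beta>_def using gate_img_PI[OF G] by simp
  have \<beta>Y: "\<beta> PY = pm (\<beta> PX) (\<beta> PZ)" using \<beta>m[of PX PZ] by simp
  obtain a1 a2 where a12: "\<beta> a1 \<noteq> PI" "\<beta> a2 \<noteq> PI" "\<beta> a1 \<noteq> \<beta> a2" using nR unfolding R1_def \<beta>_def by blast
  define Q1 where "Q1 = \<beta> PX"
  define Q2 where "Q2 = \<beta> PZ"
  have bf: "\<beta> = (\<lambda>a. case a of PI \<Rightarrow> PI | PX \<Rightarrow> Q1 | PZ \<Rightarrow> Q2 | PY \<Rightarrow> pm Q1 Q2)"
  proof
    fix a show "\<beta> a = (case a of PI \<Rightarrow> PI | PX \<Rightarrow> Q1 | PZ \<Rightarrow> Q2 | PY \<Rightarrow> pm Q1 Q2)"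
      using \<beta>I \<beta>Y unfolding Q1_def Q2_def by (cases a) simp_all
  qed
  have Q: "Q1 \<noteq> PI \<and> Q2 \<noteq> PI \<and> Q1 \<noteq> Q2" by (rule Qlem[OF bf a12])
  define P1 where "P1 = fst (gate_img G (PX,PI))"
  define P2 where "P2 = fst (gate_img G (PZ,PI))"
  have gX: "gate_img G (PX,PI) = (P1, Q1)" unfolding P1_def Q1_def \<beta>_def by simp
  have gZ: "gate_img G (PZ,PI) = (P2, Q2)" unfolding P2_def Q2_def \<beta>_def by simp
  have "comm2 (P1,Q1) (P2,Q2) = comm2 (PX,PI) (PZ,PI)" using gate_img_comm[OF G, of "(PX,PI)" "(PZ,PI)"] gX gZ by simp
  hence cP: "comm1 P1 P2" using Q unfolding comm2_def comm1_def by auto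
  show ?thesis
  proof (cases "P1 = PI \<and> P2 = PI")
    case True
    obtain b2 where b2: "clifford1 b2" "img1 b2 PX = Q1" "img1 b2 PZ = Q2" using clif1_XZ_exists Q by blast
    have T: "gate_img (kron2 (1\<^sub>m 2) b2 * SWAP) x = (img1 (1\<^sub>m 2) (snd x), img1 b2 (fst x))" for x
      by (simp add: clif2_mult(2)[OF kron_clif(1)[OF clif1_one b2(1)] SWAP_clif(1)] SWAP_clif(2) kron_clif(2)[OF clif1_one b2(1)])
    have hu: "gate_img (kron2 (1\<^sub>m 2) b2 * SWAP) (PX,PI) = gate_img G (PX,PI)"
      using T gX True b2 img1_PI[OF clif1_one] by simp
    have hv: "gate_img (kron2 (1\<^sub>m 2) b2 * SWAP) (PZ,PI) = gate_img G (PZ,PI)"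
      using T gZ True b2 img1_PI[OF clif1_one] by simp
    obtain a3 a4 where "clifford1 a3" "clifford1 a4" "G = kron2 (1\<^sub>m 2) b2 * SWAP * kron2 a3 a4"
      using finish[OF G SWAP_clif(1) clif1_one b2(1) _ _ _ hu hv] by auto
    hence "SWAP_class G" unfolding SWAP_class_def dressed_class_def using clif1_one b2(1) by blast
    thus ?thesis by simp
  next
    case False
    define R where "R = (if P1 = PI then P2 else P1)"
    have Rn: "R \<noteq> PI" using False unfolding R_def by auto
    define u where "u = (if P1 = PI then PZ else PX)"
    define v where "v = (if P1 = PI then PX else if P2 = PI then PZ else PY)"
    have uv: "u \<noteq> v" "u \<noteq> PI" "v \<noteq> PI" unfolding u_def v_def by auto
    define S where "S = (if R = PX then PZ else PX)"
    have SR: "S \<noteq> R" "S \<noteq> PI" unfolding S_def by auto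
    obtain b1 where b1: "clifford1 b1" "img1 b1 PZ = R" using clif1_XZ_exists[OF SR Rn] by blast
    obtain b2 where b2: "clifford1 b2" "img1 b2 u = Q1" "img1 b2 v = Q2" using clif1_exists[OF uv] Q by blast
    have T: "gate_img (kron2 b1 b2 * (CZ * SWAP)) x = (img1 b1 (fst (czf (snd x, fst x))), img1 b2 (snd (czf (snd x, fst x))))" for x
      by (simp add: clif2_mult(2)[OF kron_clif(1)[OF b1(1) b2(1)] FS_clif(1)] FS_clif(2) kron_clif(2)[OF b1(1) b2(1)])
    have P12: "P1 \<noteq> PI \<Longrightarrow> P2 \<noteq> PI \<Longrightarrow> P1 = P2" using cP unfolding comm1_def by auto
    have cu: "czf (PI,u) = (if xb u then PZ else PI, u)" "czf (PI,v) = (if xb v then PZ else PI, v)"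
      by (simp_all add: czf_def xb_def)
    have f1: "img1 b1 (if xb u then PZ else PI) = P1"
    proof (cases "P1 = PI")
      case True thus ?thesis unfolding u_def xb_def using img1_PI[OF b1(1)] by simp
    next
      case F: False thus ?thesis unfolding u_def xb_def using b1(2) unfolding R_def by simp
    qed
    have f2: "img1 b1 (if xb v then PZ else PI) = P2"
    proof (cases "P1 = PI")
      case True thus ?thesis unfolding v_def xb_def using b1(2) unfolding R_def by simp
    next
      case F: False
      show ?thesis
      proof (cases "P2 = PI")
        case True thus ?thesis unfolding v_def xb_def using F img1_PI[OF b1(1)] by simp
      next
        case F2: False thus ?thesis unfolding v_def xb_def using F b1(2) P12[OF F F2] unfolding R_def by simp
      qed
    qed
    have hu: "gate_img (kron2 b1 b2 * (CZ * SWAP)) (u,PI) = gate_img G (PX,PI)"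
      unfolding T gX using cu f1 b2 by simp
    have hv: "gate_img (kron2 b1 b2 * (CZ * SWAP)) (v,PI) = gate_img G (PZ,PI)"
      unfolding T gZ using cu f2 b2 by simp
    obtain a3 a4 where "clifford1 a3" "clifford1 a4" "G = kron2 b1 b2 * (CZ * SWAP) * kron2 a3 a4"
      using finish[OF G FS_clif(1) b1(1) b2(1) uv hu hv] by auto
    hence "FSWAP_class G" unfolding FSWAP_class_def dressed_class_def using b1(1) b2(1) by blast
    thus ?thesis by simp
  qed
qed

theorem lemma8:
  fixes C :: "int \<Rightarrow> complex mat" and k :: nat and a :: int
  assumes "\<forall>i. clifford2 (C i)"
    and "\<forall>i. \<not> product_class (C i)"
    and "k \<ge> 1"
    and "irreducible_left_wall C k a"
  shows "\<forall>i. a + 1 \<le> i \<and> i \<le> a + int k - 1 \<longrightarrow> SWAP_class (C i) \<or> FSWAP_class (C i)"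
proof (intro allI impI)
  fix i assume i: "a + 1 \<le> i \<and> i \<le> a + int k - 1"
  show "SWAP_class (C i) \<or> FSWAP_class (C i)"
  proof (rule ccontr)
    assume n: "\<not> (SWAP_class (C i) \<or> FSWAP_class (C i))"
    have r: "R1 (C i)" using classify[OF assms(1)[rule_format, of i]] n by blast
    have w: "left_wall C a (a + int k)" using assms(4) unfolding irreducible_left_wall_def by blast
    have irr: "\<And>b c. a \<le> b \<Longrightarrow> b \<le> c \<Longrightarrow> c \<le> a + int k \<Longrightarrow> (b, c) \<noteq> (a, a + int k) \<Longrightarrow> \<not> left_wall C b c"
      using assms(4) unfolding irreducible_left_wall_def by blast
    have "left_wall C a i \<or> left_wall C i (a + int k)"
      by (rule cut_lemma[OF assms(1) r w]) (use i in auto)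
    moreover have "\<not> left_wall C a i" by (rule irr) (use i in auto)
    moreover have "\<not> left_wall C i (a + int k)" by (rule irr) (use i in auto)
    ultimately show False by blast
  qed
qed

end
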